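(* Let $\mathcal H$ be an infinite-dimensional complex Hilbert space. The generalized effect algebras $(\mathcal R_f(\mathcal H);\oplus_{|\mathcal R_f(\mathcal H)},o)$ and $(\mathcal C_f(\mathcal H);\oplus_{|\mathcal C_f(\mathcal H)},o)$ are not monotone Dedekind downwards $\sigma$-complete.
   Context: Bilinear forms $t$ on $\mathcal H$ are sesquilinear maps $D(t)\times D(t)\to\mathbb C$ on a dense linear subspace $D(t)$ (linear in the first argument); $t$ is positive if $t(x,x)\ge0$ on $D(t)$, bounded if $\sup\{t(x,x)\mid x\in D(t),\|x\|=1\}<\infty$. The sum $t+s$ has domain $D(t)\cap D(s)$. $o$ is the zero form on $\mathcal H$. $\mathcal V_f(\mathcal H)$ is the set of positive bilinear forms with dense domain such that $D(t)=\mathcal H$ whenever $t$ is bounded; $t\oplus s$ is defined iff $t$ or $s$ is bounded or $D(t)=D(s)$, and then $t\oplus s=t+s$. A positive form is closed if $D(t)$ is a Hilbert space under $(x,y)_t=t(x,y)+(1+m_t)(x,y)$, $m_t=\inf\{t(x,x)\mid x\in D(t),\|x\|=1\}$; closable if it has a closed extension. For positive $t$, the regular part $t_r$ is the largest closable positive form with domain $D(t)$ and $t_r(x,x)\le t(x,x)$ on $D(t)$; $t_s=t-t_r$; $t$ is regular if $t_s=0$. $\mathcal R_f(\mathcal H)$ and $\mathcal C_f(\mathcal H)$ are the sets of regular, resp. closed, forms in $\mathcal V_f(\mathcal H)$. For $Q\subseteq\mathcal V_f(\mathcal H)$, $x\oplus_{|Q}y$ is defined iff $x\oplus y$ is defined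 and lies in $Q$, and then equals $x\oplus y$; these restrictions make $\mathcal R_f(\mathcal H)$ and $\mathcal C_f(\mathcal H)$ generalized effect algebras, with induced order $x\le_Q y$ iff $x\oplus_{|Q}z=y$ for some $z\in Q$. A generalized effect algebra is monotone Dedekind downwards $\sigma$-complete if every sequence $x_1\ge x_2\ge\cdots$ in its induced order has an infimum in it. *)

theory Defs
  imports Complex_Main
begin

text \<open>The library has no class of complex inner product spaces, so a complex Hilbert
space is given by a carrier type 'a (an abelian group), a complex scalar multiplication
sm and an inner product ip (linear in the first argument).\<close>

definition hnorm :: "('a \<Rightarrow> 'a \<Rightarrow> complex) \<Rightarrow> 'a \<Rightarrow> real" where
  "hnorm ip x = sqrt (Re (ip x x))"

definition complex_hilbert_space ::
  "(complex \<Rightarrow> 'a::ab_group_add \<Rightarrow> 'a) \<Rightarrow> ('a \<Rightarrow> 'a \<Rightarrow> complex) \<Rightarrow> bool" where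
  "complex_hilbert_space sm ip \<longleftrightarrow>
     vector_space sm \<and>
     (\<forall>x y z. ip (x + y) z = ip x z + ip y z) \<and>
     (\<forall>c x y. ip (sm c x) y = c * ip x y) \<and>
     (\<forall>x y. ip y x = cnj (ip x y)) \<and>
     (\<forall>x. Im (ip x x) = 0 \<and> Re (ip x x) \<ge> 0) \<and>
     (\<forall>x. ip x x = 0 \<longrightarrow> x = 0) \<and>
     (\<forall>X :: nat \<Rightarrow> 'a.
        (\<forall>e>0. \<exists>N. \<forall>m\<ge>N. \<forall>n\<ge>N. hnorm ip (X m - X n) < e) \<longrightarrow>
        (\<exists>l. (\<lambda>n. hnorm ip (X n - l)) \<longlonglongrightarrow> 0))"

definition infinite_dimensional :: "(complex \<Rightarrow> 'a::ab_group_add \<Rightarrow> 'a) \<Rightarrow> bool" where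
  "infinite_dimensional sm \<longleftrightarrow> \<not> (\<exists>B. finite B \<and> module.span sm B = UNIV)"

text \<open>A form is a pair (domain, values); values outside domain x domain are normalized
to 0, so that equality of forms is equality of domains and of values on the domain.\<close>

type_synonym 'a form = "'a set \<times> ('a \<Rightarrow> 'a \<Rightarrow> complex)"

definition fdom :: "'a form \<Rightarrow> 'a set" where "fdom t = fst t"
definition fval :: "'a form \<Rightarrow> 'a \<Rightarrow> 'a \<Rightarrow> complex" where "fval t = snd t"

definition dense_in :: "('a::ab_group_add \<Rightarrow> 'a \<Rightarrow> complex) \<Rightarrow> 'a set \<Rightarrow> bool" where
  "dense_in ip D \<longleftrightarrow> (\<forall>x. \<forall>e>0. \<exists>y\<in>D. hnorm ip (x - y) < e)"

definition is_form ::
  "(complex \<Rightarrow> 'a::ab_group_add \<Rightarrow> 'a) \<Rightarrow> ('a \<Rightarrow> 'a \<Rightarrow> complex) \<Rightarrow> 'a form \<Rightarrow> bool" where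
  "is_form sm ip t \<longleftrightarrow>
     module.subspace sm (fdom t) \<and> dense_in ip (fdom t) \<and>
     (\<forall>x\<in>fdom t. \<forall>y\<in>fdom t. \<forall>z\<in>fdom t.
        fval t (x + y) z = fval t x z + fval t y z \<and>
        fval t z (x + y) = fval t z x + fval t z y) \<and>
     (\<forall>c. \<forall>x\<in>fdom t. \<forall>y\<in>fdom t.
        fval t (sm c x) y = c * fval t x y \<and>
        fval t x (sm c y) = cnj c * fval t x y) \<and>
     (\<forall>x y. \<not> (x \<in> fdom t \<and> y \<in> fdom t) \<longrightarrow> fval t x y = 0)"

definition positive_form :: "'a form \<Rightarrow> bool" where
  "positive_form t \<longleftrightarrow> (\<forall>x\<in>fdom t. Im (fval t x x) = 0 \<and> Re (fval t x x) \<ge> 0)"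

definition bounded_form :: "('a \<Rightarrow> 'a \<Rightarrow> complex) \<Rightarrow> 'a form \<Rightarrow> bool" where
  "bounded_form ip t \<longleftrightarrow>
     bdd_above {Re (fval t x x) | x. x \<in> fdom t \<and> hnorm ip x = 1}"

definition form_plus :: "'a form \<Rightarrow> 'a form \<Rightarrow> 'a form" where
  "form_plus t s = (fdom t \<inter> fdom s,
     \<lambda>x y. if x \<in> fdom t \<inter> fdom s \<and> y \<in> fdom t \<inter> fdom s
           then fval t x y + fval s x y else 0)"

definition zero_form :: "'a form" where
  "zero_form = (UNIV, \<lambda>_ _. 0)"

definition Vf :: "(complex \<Rightarrow> 'a::ab_group_add \<Rightarrow> 'a) \<Rightarrow> ('a \<Rightarrow> 'a \<Rightarrow> complex) \<Rightarrow> 'a form set" where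
  "Vf sm ip = {t. is_form sm ip t \<and> positive_form t \<and>
                  (bounded_form ip t \<longrightarrow> fdom t = UNIV)}"

definition form_oplus :: "('a \<Rightarrow> 'a \<Rightarrow> complex) \<Rightarrow> 'a form \<Rightarrow> 'a form \<Rightarrow> 'a form option" where
  "form_oplus ip t s =
     (if bounded_form ip t \<or> bounded_form ip s \<or> fdom t = fdom s
      then Some (form_plus t s) else None)"

definition lower_bound_form :: "('a \<Rightarrow> 'a \<Rightarrow> complex) \<Rightarrow> 'a form \<Rightarrow> real" where
  "lower_bound_form ip t = Inf {Re (fval t x x) | x. x \<in> fdom t \<and> hnorm ip x = 1}"

text \<open>The norm of the inner product (x,y)_t = t(x,y) + (1+m_t)(x,y).\<close>
definition tnorm :: "('a::ab_group_add \<Rightarrow> 'a \<Rightarrow> complex) \<Rightarrow> 'a form \<Rightarrow> 'a \<Rightarrow> real" where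
  "tnorm ip t x = sqrt (Re (fval t x x + complex_of_real (1 + lower_bound_form ip t) * ip x x))"

definition closed_form :: "('a::ab_group_add \<Rightarrow> 'a \<Rightarrow> complex) \<Rightarrow> 'a form \<Rightarrow> bool" where
  "closed_form ip t \<longleftrightarrow> positive_form t \<and>
     (\<forall>X :: nat \<Rightarrow> 'a. (\<forall>n. X n \<in> fdom t) \<and>
        (\<forall>e>0. \<exists>N. \<forall>m\<ge>N. \<forall>n\<ge>N. tnorm ip t (X m - X n) < e) \<longrightarrow>
        (\<exists>l\<in>fdom t. (\<lambda>n. tnorm ip t (X n - l)) \<longlonglongrightarrow> 0))"

definition closable_form ::
  "(complex \<Rightarrow> 'a::ab_group_add \<Rightarrow> 'a) \<Rightarrow> ('a \<Rightarrow> 'a \<Rightarrow> complex) \<Rightarrow> 'a form \<Rightarrow> bool" where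
  "closable_form sm ip t \<longleftrightarrow>
     (\<exists>s. is_form sm ip s \<and> positive_form s \<and> closed_form ip s \<and> fdom t \<subseteq> fdom s \<and>
          (\<forall>x\<in>fdom t. \<forall>y\<in>fdom t. fval s x y = fval t x y))"

definition is_regular_part ::
  "(complex \<Rightarrow> 'a::ab_group_add \<Rightarrow> 'a) \<Rightarrow> ('a \<Rightarrow> 'a \<Rightarrow> complex) \<Rightarrow> 'a form \<Rightarrow> 'a form \<Rightarrow> bool" where
  "is_regular_part sm ip t r \<longleftrightarrow>
     is_form sm ip r \<and> fdom r = fdom t \<and> positive_form r \<and> closable_form sm ip r \<and>
     (\<forall>x\<in>fdom t. Re (fval r x x) \<le> Re (fval t x x)) \<and>
     (\<forall>u. is_form sm ip u \<and> fdom u = fdom t \<and> positive_form u \<and> closable_form sm ip u \<and>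
          (\<forall>x\<in>fdom t. Re (fval u x x) \<le> Re (fval t x x)) \<longrightarrow>
          (\<forall>x\<in>fdom t. Re (fval u x x) \<le> Re (fval r x x)))"

definition regular_part ::
  "(complex \<Rightarrow> 'a::ab_group_add \<Rightarrow> 'a) \<Rightarrow> ('a \<Rightarrow> 'a \<Rightarrow> complex) \<Rightarrow> 'a form \<Rightarrow> 'a form" where
  "regular_part sm ip t = (THE r. is_regular_part sm ip t r)"

definition singular_part ::
  "(complex \<Rightarrow> 'a::ab_group_add \<Rightarrow> 'a) \<Rightarrow> ('a \<Rightarrow> 'a \<Rightarrow> complex) \<Rightarrow> 'a form \<Rightarrow> 'a form" where
  "singular_part sm ip t = (fdom t,
     \<lambda>x y. if x \<in> fdom t \<and> y \<in> fdom t
           then fval t x y - fval (regular_part sm ip t) x y else 0)"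

definition regular_form ::
  "(complex \<Rightarrow> 'a::ab_group_add \<Rightarrow> 'a) \<Rightarrow> ('a \<Rightarrow> 'a \<Rightarrow> complex) \<Rightarrow> 'a form \<Rightarrow> bool" where
  "regular_form sm ip t \<longleftrightarrow>
     (\<forall>x\<in>fdom t. \<forall>y\<in>fdom t. fval (singular_part sm ip t) x y = 0)"

definition Rf :: "(complex \<Rightarrow> 'a::ab_group_add \<Rightarrow> 'a) \<Rightarrow> ('a \<Rightarrow> 'a \<Rightarrow> complex) \<Rightarrow> 'a form set" where
  "Rf sm ip = {t \<in> Vf sm ip. regular_form sm ip t}"

definition Cf :: "(complex \<Rightarrow> 'a::ab_group_add \<Rightarrow> 'a) \<Rightarrow> ('a \<Rightarrow> 'a \<Rightarrow> complex) \<Rightarrow> 'a form set" where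
  "Cf sm ip = {t \<in> Vf sm ip. closed_form ip t}"

definition restr_oplus :: "('a \<Rightarrow> 'a \<Rightarrow> complex) \<Rightarrow> 'a form set \<Rightarrow> 'a form \<Rightarrow> 'a form \<Rightarrow> 'a form option" where
  "restr_oplus ip Q x y =
     (case form_oplus ip x y of None \<Rightarrow> None
      | Some z \<Rightarrow> if z \<in> Q then Some z else None)"

definition restr_le :: "('a \<Rightarrow> 'a \<Rightarrow> complex) \<Rightarrow> 'a form set \<Rightarrow> 'a form \<Rightarrow> 'a form \<Rightarrow> bool" where
  "restr_le ip Q x y \<longleftrightarrow> (\<exists>z\<in>Q. restr_oplus ip Q x z = Some y)"

definition mono_dedekind_down_sigma_complete ::
  "('a \<Rightarrow> 'a \<Rightarrow> complex) \<Rightarrow> 'a form set \<Rightarrow> bool" where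
  "mono_dedekind_down_sigma_complete ip Q \<longleftrightarrow>
     (\<forall>X :: nat \<Rightarrow> 'a form. (\<forall>n. X n \<in> Q) \<and> (\<forall>n. restr_le ip Q (X (Suc n)) (X n)) \<longrightarrow>
        (\<exists>a\<in>Q. (\<forall>n. restr_le ip Q a (X n)) \<and>
               (\<forall>b\<in>Q. (\<forall>n. restr_le ip Q b (X n)) \<longrightarrow> restr_le ip Q b a)))"

end

theory Submission imports Defs begin

locale hs =
  fixes sm :: "complex \<Rightarrow> 'a::ab_group_add \<Rightarrow> 'a" and ip :: "'a \<Rightarrow> 'a \<Rightarrow> complex"
  assumes H: "complex_hilbert_space sm ip"
begin

lemma VS: "vector_space sm" using H unfolding complex_hilbert_space_def by (rule conjunct1)
sublocale vs: vector_space sm by (rule VS)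

lemma ip_addL: "ip (x+y) z = ip x z + ip y z" using H unfolding complex_hilbert_space_def by blast
lemma ip_smL: "ip (sm c x) y = c * ip x y" using H unfolding complex_hilbert_space_def by blast
lemma ip_cnj: "ip y x = cnj (ip x y)" using H unfolding complex_hilbert_space_def by blast
lemma ip_self_Im: "Im (ip x x) = 0" using H unfolding complex_hilbert_space_def by blast
lemma ip_self_Re: "Re (ip x x) \<ge> 0" using H unfolding complex_hilbert_space_def by blast
lemma ip_def0: "ip x x = 0 \<Longrightarrow> x = 0" using H unfolding complex_hilbert_space_def by blast
lemma complete: "(\<forall>e>0. \<exists>N. \<forall>m\<ge>N. \<forall>n\<ge>N. hnorm ip (X m - X n) < e) \<Longrightarrow>
        (\<exists>l. (\<lambda>n. hnorm ip (X n - l)) \<longlonglongrightarrow> 0)" using H unfolding complex_hilbert_space_def by blast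

lemma ip_addR: "ip x (y+z) = ip x y + ip x z"
  by (metis ip_cnj ip_addL complex_cnj_add)
lemma ip_smR: "ip x (sm c y) = cnj c * ip x y"
  by (metis ip_cnj ip_smL complex_cnj_mult)
lemma ip_zeroL[simp]: "ip 0 y = 0"
  by (metis add.right_neutral add_right_imp_eq ip_addL add_0)
lemma ip_zeroR[simp]: "ip y 0 = 0"
  by (metis ip_cnj ip_zeroL complex_cnj_zero)
lemma ip_minusL: "ip (-x) y = - ip x y"
  by (metis add.right_inverse ip_addL ip_zeroL add_eq_0_iff)
lemma ip_minusR: "ip x (-y) = - ip x y"
  by (metis ip_cnj ip_minusL complex_cnj_minus)
lemma ip_diffL: "ip (x - y) z = ip x z - ip y z"
  by (simp only: diff_conv_add_uminus ip_addL ip_minusL)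
lemma ip_diffR: "ip x (y - z) = ip x y - ip x z"
  by (simp only: diff_conv_add_uminus ip_addR ip_minusR)
lemma ip_sumL: "ip (sum f A) y = (\<Sum>a\<in>A. ip (f a) y)"
  by (induct A rule: infinite_finite_induct) (auto simp: ip_addL)
lemma ip_sumR: "ip y (sum f A) = (\<Sum>a\<in>A. ip y (f a))"
  by (induct A rule: infinite_finite_induct) (auto simp: ip_addR)

lemma mult_cnj_sq: "z * cnj z = (complex_of_real (cmod z))^2"
  by (simp add: complex_norm_square[symmetric])
lemma cnj_mult_sq: "cnj z * z = (complex_of_real (cmod z))^2"
  by (simp add: mult.commute mult_cnj_sq)

abbreviation hn where "hn \<equiv> hnorm ip"

lemma hn_sq: "(hn x)^2 = Re (ip x x)"
  unfolding hnorm_def using ip_self_Re[of x] by simp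
lemma ip_self: "ip x x = complex_of_real ((hn x)^2)"
  using ip_self_Im hn_sq by (simp add: complex_eq_iff)
lemma hn_ge0: "hn x \<ge> 0" using ip_self_Re[of x] by (simp add: hnorm_def)
lemma hn_0_iff: "hn x = 0 \<longleftrightarrow> x = 0"
proof
  assume "hn x = 0"
  then have "ip x x = 0" by (simp add: ip_self)
  then show "x = 0" by (rule ip_def0)
next
  assume "x = 0" then show "hn x = 0" by (simp add: hnorm_def)
qed
lemma hn_zero[simp]: "hn 0 = 0" using hn_0_iff by simp

lemma hn_sm: "hn (sm c x) = cmod c * hn x"
proof -
  have "ip (sm c x) (sm c x) = (c * cnj c) * ip x x" by (simp add: ip_smL ip_smR mult.assoc)
  also have "\<dots> = complex_of_real ((cmod c)^2 * (hn x)^2)" by (simp add: ip_self flip: complex_norm_square)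
  finally have "(hn (sm c x))^2 = (cmod c * hn x)^2" by (simp add: hn_sq power_mult_distrib)
  then show ?thesis using hn_ge0 by (simp add: power2_eq_iff_nonneg)
qed

lemma hn_minus: "hn (-x) = hn x"
  using hn_sm[of "-1" x] by simp
lemma hn_commute: "hn (x - y) = hn (y - x)"
  by (metis hn_minus minus_diff_eq)

lemma ip_expand: "ip (x - sm c y) (x - sm c y) = ip x x - cnj c * ip x y - c * ip y x + c * cnj c * ip y y"
  by (simp add: ip_diffL ip_diffR ip_smL ip_smR algebra_simps)

lemma CS: "cmod (ip x y) \<le> hn x * hn y"
proof (cases "y = 0")
  case True then show ?thesis by simp
next
  case False
  define r where "r = (hn y)^2"
  have r: "r > 0" using False hn_0_iff hn_ge0 unfolding r_def by (metis zero_less_power2)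
  define A where "A = ip x y"
  define c where "c = A / of_real r"
  have "0 \<le> Re (ip (x - sm c y) (x - sm c y))" by (rule ip_self_Re)
  also have "ip (x - sm c y) (x - sm c y) = of_real ((hn x)^2 - (cmod A)^2 / r)"
  proof -
    have "ip (x - sm c y) (x - sm c y) = of_real ((hn x)^2) - cnj c * A - c * cnj A + c * cnj c * of_real r"
      unfolding ip_expand A_def r_def by (simp add: ip_self ip_cnj[of x y])
    also have "\<dots> = of_real ((hn x)^2 - (cmod A)^2 / r)"
      using r cmod_power2[of A] unfolding c_def
      by (simp add: field_simps complex_mult_cnj complex_eq_iff power2_eq_square)
    finally show ?thesis .
  qed
  finally have "(cmod A)^2 \<le> (hn x)^2 * r" using r by (simp add: field_simps)
  then have "(cmod A)^2 \<le> (hn x * hn y)^2" by (simp add: r_def power_mult_distrib)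
  then show ?thesis unfolding A_def using hn_ge0
    by (meson mult_nonneg_nonneg power2_le_imp_le)
qed

lemma hn_triangle: "hn (x + y) \<le> hn x + hn y"
proof -
  have "ip (x+y) (x+y) = ip x x + ip y y + (ip x y + cnj (ip x y))"
    by (simp add: ip_addL ip_addR ip_cnj[of x y])
  then have "(hn (x+y))^2 = (hn x)^2 + (hn y)^2 + 2 * Re (ip x y)"
    by (simp add: hn_sq)
  also have "\<dots> \<le> (hn x)^2 + (hn y)^2 + 2 * (hn x * hn y)"
    using CS[of x y] complex_Re_le_cmod[of "ip x y"] by linarith
  also have "\<dots> = (hn x + hn y)^2" by (simp add: power2_eq_square algebra_simps)
  finally show ?thesis using hn_ge0 by (meson add_nonneg_nonneg power2_le_imp_le)
qed

lemma hn_diff_tri: "hn (x - z) \<le> hn (x - y) + hn (y - z)"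
  using hn_triangle[of "x - y" "y - z"] by simp


lemma ip_smsumL: "ip (\<Sum>i\<in>A. sm (c i) (f i)) y = (\<Sum>i\<in>A. c i * ip (f i) y)"
  by (simp add: ip_sumL ip_smL)

end

definition gs_step :: "(complex \<Rightarrow> 'a::ab_group_add \<Rightarrow> 'a) \<Rightarrow> ('a \<Rightarrow> 'a \<Rightarrow> complex) \<Rightarrow> 'a list \<Rightarrow> 'a" where
  "gs_step sm ip L = (let v = (SOME v. v \<notin> module.span sm (set L));
                        w = v - (\<Sum>i<length L. sm (ip v (L!i)) (L!i))
                    in sm (complex_of_real (1 / hnorm ip w)) w)"

fun gs :: "(complex \<Rightarrow> 'a::ab_group_add \<Rightarrow> 'a) \<Rightarrow> ('a \<Rightarrow> 'a \<Rightarrow> complex) \<Rightarrow> nat \<Rightarrow> 'a list" where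
  "gs sm ip 0 = []" | "gs sm ip (Suc n) = gs sm ip n @ [gs_step sm ip (gs sm ip n)]"

locale hsi = hs +
  assumes ID: "infinite_dimensional sm"
begin

definition e :: "nat \<Rightarrow> 'a" where "e n = gs sm ip (Suc n) ! n"

lemma gs_len: "length (gs sm ip n) = n" by (induct n) auto

lemma gs_nth: "i < n \<Longrightarrow> gs sm ip n ! i = e i"
proof (induct n)
  case 0 then show ?case by simp
next
  case (Suc n)
  show ?case
  proof (cases "i < n")
    case True then show ?thesis using Suc by (simp add: nth_append gs_len)
  next
    case False then have "i = n" using Suc by simp
    then show ?thesis by (simp add: e_def)
  qed
qed

lemma exists_outside: "finite B \<Longrightarrow> \<exists>v. v \<notin> vs.span B"
  using ID unfolding infinite_dimensional_def by auto

lemma gs_step_orth: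
  assumes on: "\<forall>i<length L. \<forall>j<length L. ip (L!i) (L!j) = (if i = j then 1 else 0)"
  shows "ip (gs_step sm ip L) (gs_step sm ip L) = 1 \<and> (\<forall>j<length L. ip (gs_step sm ip L) (L!j) = 0)"
proof -
  define v where "v = (SOME v. v \<notin> vs.span (set L))"
  have v: "v \<notin> vs.span (set L)" unfolding v_def
    by (rule someI_ex) (rule exists_outside, simp)
  define w where "w = v - (\<Sum>i<length L. sm (ip v (L!i)) (L!i))"
  have g: "gs_step sm ip L = sm (complex_of_real (1 / hn w)) w"
    unfolding gs_step_def v_def w_def Let_def by simp
  have orth: "ip w (L!j) = 0" if "j < length L" for j
  proof -
    have "ip (\<Sum>i<length L. sm (ip v (L!i)) (L!i)) (L!j) = (\<Sum>i<length L. ip v (L!i) * ip (L!i) (L!j))"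
      by (rule ip_smsumL)
    also have "\<dots> = (\<Sum>i<length L. if i = j then ip v (L!j) else 0)"
      using on that by (intro sum.cong) auto
    also have "\<dots> = ip v (L!j)" using that by simp
    finally show ?thesis unfolding w_def ip_diffL by simp
  qed
  have "w \<noteq> 0"
  proof
    assume "w = 0"
    then have "v = (\<Sum>i<length L. sm (ip v (L!i)) (L!i))" unfolding w_def by simp
    also have "\<dots> \<in> vs.span (set L)"
      by (intro vs.span_sum vs.span_scale vs.span_base) simp
    finally show False using v by simp
  qed
  then have hw: "hn w > 0" using hn_0_iff hn_ge0 by (metis order_neq_le_trans)
  have "hn (gs_step sm ip L) = 1" unfolding g hn_sm using hw by (simp add: norm_divide)
  then have "ip (gs_step sm ip L) (gs_step sm ip L) = 1" by (simp add: ip_self)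
  moreover have "\<forall>j<length L. ip (gs_step sm ip L) (L!j) = 0"
    unfolding g by (simp add: ip_smL orth)
  ultimately show ?thesis by simp
qed

lemma gs_on: "\<forall>i<n. \<forall>j<n. ip (gs sm ip n ! i) (gs sm ip n ! j) = (if i = j then 1 else 0)"
proof (induct n)
  case 0 then show ?case by simp
next
  case (Suc n)
  note st = gs_step_orth[of "gs sm ip n", unfolded gs_len, OF Suc]
  show ?case
  proof (intro allI impI)
    fix i j assume ij: "i < Suc n" "j < Suc n"
    show "ip (gs sm ip (Suc n) ! i) (gs sm ip (Suc n) ! j) = (if i = j then 1 else 0)"
      using ij Suc st
      apply (cases "i < n"; cases "j < n")
      apply (auto simp: nth_append gs_len)
      apply (subst ip_cnj) apply simp
      done
  qed
qed

lemma e_on: "ip (e i) (e j) = (if i = j then 1 else 0)"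
proof -
  obtain n where n: "i < n" "j < n" by (metis lessI max.cobounded1 max.cobounded2 le_imp_less_Suc)
  have "ip (gs sm ip n ! i) (gs sm ip n ! j) = (if i = j then 1 else 0)" using gs_on[of n] n by blast
  then show ?thesis using gs_nth[OF n(1)] gs_nth[OF n(2)] by simp
qed

lemma hn_e: "hn (e i) = 1"
  using e_on[of i i] hn_sq[of "e i"] hn_ge0 by (simp add: power2_eq_1_iff) (metis abs_of_nonneg hn_ge0 power2_eq_1_iff abs_1 one_power2 real_sqrt_one real_sqrt_abs)

end

context hsi
begin

definition cf :: "'a \<Rightarrow> nat \<Rightarrow> complex" where "cf x k = ip x (e k)"

lemma cf_add: "cf (x + y) k = cf x k + cf y k" by (simp add: cf_def ip_addL)
lemma cf_diff: "cf (x - y) k = cf x k - cf y k" by (simp add: cf_def ip_diffL)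
lemma cf_minus: "cf (- x) k = - cf x k" by (simp add: cf_def ip_minusL)
lemma cf_sm: "cf (sm c x) k = c * cf x k" by (simp add: cf_def ip_smL)
lemma cf_zero[simp]: "cf 0 k = 0" by (simp add: cf_def)

lemma ip_esum_e: "finite A \<Longrightarrow> ip (\<Sum>k\<in>A. sm (c k) (e k)) (e j) = (if j \<in> A then c j else 0)"
  by (simp add: ip_sumL ip_smL e_on if_distrib[of "\<lambda>x. _ * x"] cong: if_cong)

lemma cf_esum: "finite A \<Longrightarrow> cf (\<Sum>k\<in>A. sm (c k) (e k)) j = (if j \<in> A then c j else 0)"
  unfolding cf_def by (rule ip_esum_e)

lemma ip_esum: "finite A \<Longrightarrow> ip (\<Sum>k\<in>A. sm (c k) (e k)) (\<Sum>k\<in>A. sm (d k) (e k)) = (\<Sum>k\<in>A. c k * cnj (d k))"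
proof -
  assume A: "finite A"
  have "ip (\<Sum>k\<in>A. sm (c k) (e k)) (\<Sum>k\<in>A. sm (d k) (e k)) =
     (\<Sum>j\<in>A. cnj (d j) * ip (\<Sum>k\<in>A. sm (c k) (e k)) (e j))"
    by (simp add: ip_sumR ip_smR)
  also have "\<dots> = (\<Sum>j\<in>A. c j * cnj (d j))"
    using A by (intro sum.cong) (auto simp: ip_esum_e)
  finally show ?thesis .
qed

lemma hn_esum_sq: "finite A \<Longrightarrow> (hn (\<Sum>k\<in>A. sm (c k) (e k)))^2 = (\<Sum>k\<in>A. (cmod (c k))^2)"
proof -
  assume A: "finite A"
  have "complex_of_real ((hn (\<Sum>k\<in>A. sm (c k) (e k)))^2) = (\<Sum>k\<in>A. c k * cnj (c k))"
    using ip_esum[OF A, of c c] by (simp add: ip_self)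
  also have "\<dots> = complex_of_real (\<Sum>k\<in>A. (cmod (c k))^2)"
    by (simp only: of_real_sum complex_norm_square)
  finally show ?thesis by (simp only: of_real_eq_iff)
qed

lemma bessel_fin: "finite A \<Longrightarrow> (\<Sum>k\<in>A. (cmod (cf x k))^2) \<le> (hn x)^2"
proof -
  assume A: "finite A"
  define S where "S = (\<Sum>k\<in>A. sm (cf x k) (e k))"
  define s where "s = (\<Sum>k\<in>A. (cmod (cf x k))^2)"
  have xS: "ip x S = of_real s"
    unfolding S_def s_def by (simp add: ip_sumR ip_smR cnj_mult_sq cf_def)
  have Sx: "ip S x = of_real s" using xS by (metis ip_cnj complex_cnj_complex_of_real)
  have SS: "ip S S = of_real s" unfolding S_def s_def using A
    by (simp add: ip_esum mult_cnj_sq)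
  have "ip (x - S) (x - S) = ip x x - of_real s"
    by (simp add: ip_diffL ip_diffR xS Sx SS)
  then have "0 \<le> Re (ip x x) - s" using ip_self_Re[of "x - S"] by simp
  then show ?thesis by (simp add: s_def hn_sq)
qed

lemma bessel_summable: "summable (\<lambda>k. (cmod (cf x k))^2)"
  by (rule bounded_imp_summable[where B="(hn x)^2"]) (auto intro: bessel_fin)

lemma cf_lip: "cmod (cf x k - cf y k) \<le> hn (x - y)"
  using CS[of "x - y" "e k"] by (simp add: cf_def ip_diffL hn_e)

lemma cf_bound: "cmod (cf x k) \<le> hn x"
  using cf_lip[of x k 0] by simp

end

context hsi
begin

definition ps :: "(nat \<Rightarrow> complex) \<Rightarrow> nat \<Rightarrow> 'a" where
  "ps c n = (\<Sum>k<n. sm (c k) (e k))"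

lemma ps_diff: "n \<le> m \<Longrightarrow> ps c m - ps c n = (\<Sum>k\<in>{n..<m}. sm (c k) (e k))"
proof -
  assume "n \<le> m"
  then have "{..<m} = {..<n} \<union> {n..<m}" by auto
  then show ?thesis unfolding ps_def by (simp add: sum.union_disjoint[of "{..<n}" "{n..<m}"] ivl_disj_int(2))
qed

lemma RF:
  assumes sc: "summable (\<lambda>k. (cmod (c k))^2)"
  shows "\<exists>v. (\<lambda>n. hn (ps c n - v)) \<longlonglongrightarrow> 0"
proof (rule complete, intro allI impI)
  fix \<epsilon> :: real assume e: "\<epsilon> > 0"
  then have "\<epsilon>^2 > 0" by simp
  from sc[unfolded summable_Cauchy] this obtain N where
    N: "\<forall>m\<ge>N. \<forall>n. norm (\<Sum>k\<in>{m..<n}. (cmod (c k))^2) < \<epsilon>^2" by blast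
  have key: "hn (ps c m - ps c n) < \<epsilon>" if "n \<ge> N" "n \<le> m" for m n
  proof -
    have "(hn (ps c m - ps c n))^2 = (\<Sum>k\<in>{n..<m}. (cmod (c k))^2)"
      using that by (simp add: ps_diff hn_esum_sq)
    also have "\<dots> < \<epsilon>^2" using N that by (metis real_norm_def abs_le_D1 le_less_trans abs_ge_self)
    finally show ?thesis using e hn_ge0 by (meson power_less_imp_less_base less_imp_le)
  qed
  show "\<exists>N. \<forall>m\<ge>N. \<forall>n\<ge>N. hn (ps c m - ps c n) < \<epsilon>"
  proof (intro exI allI impI)
    fix m n assume "N \<le> m" "N \<le> n"
    then show "hn (ps c m - ps c n) < \<epsilon>"
    proof (cases "n \<le> m")
      case True then show ?thesis using key \<open>N \<le> n\<close> by blast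
    next
      case False
      then have "hn (ps c n - ps c m) < \<epsilon>" using key \<open>N \<le> m\<close> by simp
      then show ?thesis by (metis hn_commute)
    qed
  qed
qed

lemma RF_cf:
  assumes v: "(\<lambda>n. hn (ps c n - v)) \<longlonglongrightarrow> 0"
  shows "cf v j = c j"
proof -
  have "cmod (cf v j - c j) \<le> 0"
  proof (rule LIMSEQ_le_const[OF v], intro exI allI impI)
    fix n assume "Suc j \<le> n"
    then have "cf (ps c n) j = c j" unfolding ps_def by (simp add: cf_esum)
    then show "cmod (cf v j - c j) \<le> hn (ps c n - v)"
      using cf_lip[of v j "ps c n"] by (simp add: hn_commute)
  qed
  then show ?thesis by simp
qed

lemma RF_hn:
  assumes v: "(\<lambda>n. hn (ps c n - v)) \<longlonglongrightarrow> 0" and sc: "summable (\<lambda>k. (cmod (c k))^2)"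
  shows "hn v \<le> sqrt (\<Sum>k. (cmod (c k))^2)"
proof -
  have lim: "(\<lambda>n. hn (ps c n - v) + sqrt (\<Sum>k. (cmod (c k))^2)) \<longlonglongrightarrow> 0 + sqrt (\<Sum>k. (cmod (c k))^2)"
    by (intro tendsto_add v tendsto_const)
  show ?thesis
  proof (rule LIMSEQ_le_const[OF lim[simplified]], intro exI allI impI)
    fix n :: nat
    have "(hn (ps c n))^2 = (\<Sum>k<n. (cmod (c k))^2)" unfolding ps_def by (simp add: hn_esum_sq)
    also have "\<dots> \<le> (\<Sum>k. (cmod (c k))^2)" by (rule sum_le_suminf[OF sc]) auto
    finally have "hn (ps c n) \<le> sqrt (\<Sum>k. (cmod (c k))^2)" using hn_ge0 real_le_rsqrt by blast
    moreover have "hn v \<le> hn (v - ps c n) + hn (ps c n)" using hn_diff_tri[of v 0 "ps c n"] by simp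
    ultimately show "hn v \<le> hn (ps c n - v) + sqrt (\<Sum>k. (cmod (c k))^2)"
      by (simp add: hn_commute)
  qed
qed

lemma approx_finite:
  assumes "\<epsilon> > 0"
  shows "\<exists>y. (\<exists>N. \<forall>k\<ge>N. cf y k = 0) \<and> hn (x - y) < \<epsilon>"
proof -
  define f where "f k = (cmod (cf x k))^2" for k
  have sf: "summable f" unfolding f_def by (rule bessel_summable)
  have "\<epsilon>^2 > 0" using assms by simp
  from suminf_exist_split[OF this sf] obtain N where N: "norm (\<Sum>i. f (i + N)) < \<epsilon>^2" by auto
  define c where "c k = (if k \<ge> N then cf x k else 0)" for k
  have fc: "(cmod (c k))^2 = (if k \<ge> N then f k else 0)" for k by (simp add: c_def f_def)
  have sc: "summable (\<lambda>k. (cmod (c k))^2)"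
    unfolding fc by (rule summable_comparison_test'[OF sf]) (auto simp: f_def)
  have "(\<Sum>k. (cmod (c k))^2) = (\<Sum>i. (cmod (c (i + N)))^2) + (\<Sum>i<N. (cmod (c i))^2)"
    by (rule suminf_split_initial_segment[OF sc])
  also have "\<dots> = (\<Sum>i. f (i + N))" by (simp add: fc)
  finally have tail: "(\<Sum>k. (cmod (c k))^2) < \<epsilon>^2" using N by simp
  obtain v where v: "(\<lambda>n. hn (ps c n - v)) \<longlonglongrightarrow> 0" using RF[OF sc] by blast
  have "hn v \<le> sqrt (\<Sum>k. (cmod (c k))^2)" by (rule RF_hn[OF v sc])
  also have "\<dots> < \<epsilon>" using tail assms by (metis real_sqrt_less_mono real_sqrt_pow2_iff less_imp_le real_sqrt_abs abs_of_pos)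
  finally have hv: "hn v < \<epsilon>" .
  show ?thesis
  proof (intro exI conjI)
    show "\<forall>k\<ge>N. cf (x - v) k = 0" by (simp add: cf_diff RF_cf[OF v] c_def)
    show "hn (x - (x - v)) < \<epsilon>" using hv by simp
  qed
qed

end

definition wt :: "nat \<Rightarrow> real" where "wt k = (if k = 0 then 0 else 2^k)"

lemma wt_ge0: "wt k \<ge> 0" by (simp add: wt_def)

context hsi
begin

definition DD :: "'a set" where "DD = {x. summable (\<lambda>k. wt k * (cmod (cf x k))^2)}"
definition TT :: "'a \<Rightarrow> real" where "TT x = (\<Sum>k. wt k * (cmod (cf x k))^2)"
definition T :: "'a \<Rightarrow> 'a \<Rightarrow> complex" where "T x y = (\<Sum>k. of_real (wt k) * cf x k * cnj (cf y k))"
definition ph :: "'a \<Rightarrow> complex" where "ph x = (\<Sum>k. if k = 0 then 0 else cf x k)"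

lemma sq_add_le: "(cmod (a + b))^2 \<le> 2 * (cmod a)^2 + 2 * (cmod b)^2"
proof -
  have "cmod (a + b) \<le> cmod a + cmod b" by (rule norm_triangle_ineq)
  then have "(cmod (a + b))^2 \<le> (cmod a + cmod b)^2" by (simp add: power_mono)
  also have "\<dots> \<le> 2 * (cmod a)^2 + 2 * (cmod b)^2"
    using sum_squares_ge_zero[of "cmod a - cmod b" 0] by (simp add: power2_eq_square algebra_simps)
  finally show ?thesis .
qed

lemma DD_add: "x \<in> DD \<Longrightarrow> y \<in> DD \<Longrightarrow> x + y \<in> DD"
  unfolding DD_def
proof (clarsimp)
  assume sx: "summable (\<lambda>k. wt k * (cmod (cf x k))^2)" and sy: "summable (\<lambda>k. wt k * (cmod (cf y k))^2)"
  show "summable (\<lambda>k. wt k * (cmod (cf (x + y) k))^2)"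
  proof (rule summable_comparison_test'[where g="\<lambda>k. 2 * (wt k * (cmod (cf x k))^2) + 2 * (wt k * (cmod (cf y k))^2)"])
    show "summable (\<lambda>k. 2 * (wt k * (cmod (cf x k))^2) + 2 * (wt k * (cmod (cf y k))^2))"
      by (intro summable_add summable_mult sx sy)
    fix k :: nat
    have "wt k * (cmod (cf (x + y) k))^2 \<le> wt k * (2 * (cmod (cf x k))^2 + 2 * (cmod (cf y k))^2)"
      unfolding cf_add by (rule mult_left_mono[OF sq_add_le wt_ge0])
    then show "norm (wt k * (cmod (cf (x + y) k))^2) \<le> 2 * (wt k * (cmod (cf x k))^2) + 2 * (wt k * (cmod (cf y k))^2)"
      using wt_ge0[of k] by (simp add: algebra_simps)
  qed
qed

lemma DD_sm: "x \<in> DD \<Longrightarrow> sm c x \<in> DD"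
proof -
  assume "x \<in> DD"
  then have "summable (\<lambda>k. (cmod c)^2 * (wt k * (cmod (cf x k))^2))"
    unfolding DD_def by (intro summable_mult) simp
  then show ?thesis unfolding DD_def by (simp add: cf_sm norm_mult power_mult_distrib ac_simps)
qed

lemma DD_zero: "0 \<in> DD" unfolding DD_def by simp

lemma DD_subspace: "vs.subspace DD"
  by (rule vs.subspaceI) (auto intro: DD_add DD_sm DD_zero)

lemma DD_diff: "x \<in> DD \<Longrightarrow> y \<in> DD \<Longrightarrow> x - y \<in> DD"
  using vs.subspace_diff[OF DD_subspace] .

lemma DD_finite: "\<forall>k\<ge>N. cf y k = 0 \<Longrightarrow> y \<in> DD"
  unfolding DD_def by (auto intro!: summable_finite[of "{..<N}"]) (meson not_le)

lemma DD_dense: "dense_in ip DD"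
  unfolding dense_in_def using approx_finite DD_finite by blast

lemma summable_T: "x \<in> DD \<Longrightarrow> y \<in> DD \<Longrightarrow> summable (\<lambda>k. of_real (wt k) * cf x k * cnj (cf y k))"
proof -
  assume x: "x \<in> DD" and y: "y \<in> DD"
  show ?thesis
  proof (rule summable_comparison_test'[where g="\<lambda>k. (wt k * (cmod (cf x k))^2) + (wt k * (cmod (cf y k))^2)"])
    show "summable (\<lambda>k. (wt k * (cmod (cf x k))^2) + (wt k * (cmod (cf y k))^2))"
      using x y unfolding DD_def by (intro summable_add) auto
    fix k :: nat
    have "cmod (cf x k) * cmod (cf y k) \<le> (cmod (cf x k))^2 + (cmod (cf y k))^2"
      using sum_squares_ge_zero[of "cmod (cf x k) - cmod (cf y k)" 0]
      by (simp add: power2_eq_square algebra_simps) (smt (verit) mult_nonneg_nonneg norm_ge_zero)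
    then have "wt k * (cmod (cf x k) * cmod (cf y k)) \<le> wt k * ((cmod (cf x k))^2 + (cmod (cf y k))^2)"
      by (rule mult_left_mono[OF _ wt_ge0])
    then show "norm (of_real (wt k) * cf x k * cnj (cf y k)) \<le> (wt k * (cmod (cf x k))^2) + (wt k * (cmod (cf y k))^2)"
      using wt_ge0[of k] by (simp add: norm_mult algebra_simps)
  qed
qed

lemma T_self: "x \<in> DD \<Longrightarrow> T x x = of_real (TT x)"
proof -
  assume x: "x \<in> DD"
  have "T x x = (\<Sum>k. of_real (wt k * (cmod (cf x k))^2))"
    unfolding T_def by (simp add: mult.assoc mult_cnj_sq)
  also have "\<dots> = of_real (TT x)" unfolding TT_def
    using x unfolding DD_def by (simp add: suminf_of_real)
  finally show ?thesis .
qed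

lemma TT_ge0: "x \<in> DD \<Longrightarrow> TT x \<ge> 0"
  unfolding TT_def DD_def by (auto intro!: suminf_nonneg simp: wt_ge0)

lemma T_addL: assumes x: "x \<in> DD" and y: "y \<in> DD" and z: "z \<in> DD" shows "T (x + y) z = T x z + T y z"
proof -
  have eq: "(\<lambda>k. of_real (wt k) * cf (x+y) k * cnj (cf z k)) = (\<lambda>k. of_real (wt k) * cf x k * cnj (cf z k) + of_real (wt k) * cf y k * cnj (cf z k))"
    by (simp add: fun_eq_iff cf_add algebra_simps)
  show ?thesis by (simp only: T_def eq suminf_add[OF summable_T[OF x z] summable_T[OF y z], symmetric])
qed
lemma T_addR: assumes x: "x \<in> DD" and y: "y \<in> DD" and z: "z \<in> DD" shows "T z (x + y) = T z x + T z y"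
proof -
  have eq: "(\<lambda>k. of_real (wt k) * cf z k * cnj (cf (x+y) k)) = (\<lambda>k. of_real (wt k) * cf z k * cnj (cf x k) + of_real (wt k) * cf z k * cnj (cf y k))"
    by (simp add: fun_eq_iff cf_add algebra_simps)
  show ?thesis by (simp only: T_def eq suminf_add[OF summable_T[OF z x] summable_T[OF z y], symmetric])
qed
lemma T_smL: assumes x: "x \<in> DD" and y: "y \<in> DD" shows "T (sm c x) y = c * T x y"
proof -
  have eq: "(\<lambda>k. of_real (wt k) * cf (sm c x) k * cnj (cf y k)) = (\<lambda>k. c * (of_real (wt k) * cf x k * cnj (cf y k)))"
    by (simp add: fun_eq_iff cf_sm algebra_simps)
  show ?thesis by (simp only: T_def eq suminf_mult[OF summable_T[OF x y]])
qed
lemma T_smR: assumes x: "x \<in> DD" and y: "y \<in> DD" shows "T x (sm c y) = cnj c * T x y"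
proof -
  have eq: "(\<lambda>k. of_real (wt k) * cf x k * cnj (cf (sm c y) k)) = (\<lambda>k. cnj c * (of_real (wt k) * cf x k * cnj (cf y k)))"
    by (simp add: fun_eq_iff cf_sm algebra_simps)
  show ?thesis by (simp only: T_def eq suminf_mult[OF summable_T[OF x y]])
qed

end

lemma amgm_aux: fixes \<epsilon> w t :: real assumes "\<epsilon> > 0" "w > 0" "t \<ge> 0"
  shows "t \<le> (\<epsilon> * (1 / w) + w * t^2 / \<epsilon>) / 2"
proof -
  have "0 \<le> (\<epsilon> - w * t)^2" by simp
  then have "2 * t * \<epsilon> * w \<le> \<epsilon>^2 + w^2 * t^2" by (simp add: power2_eq_square algebra_simps)
  then show ?thesis using assms by (simp add: field_simps power2_eq_square)
qed

context hsi
begin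

definition phterm :: "'a \<Rightarrow> nat \<Rightarrow> complex" where "phterm x k = (if k = 0 then 0 else cf x k)"

lemma ph_alt: "ph x = suminf (phterm x)" unfolding ph_def phterm_def by simp

lemma phterm_bound: assumes e: "\<epsilon> > 0" shows "norm (phterm x k) \<le> (\<epsilon> * (1/2)^k + wt k * (cmod (cf x k))^2 / \<epsilon>) / 2"
proof (cases "k = 0")
  case True then show ?thesis using e by (simp add: phterm_def wt_def)
next
  case False
  have "cmod (cf x k) \<le> (\<epsilon> * (1 / 2^k) + 2^k * (cmod (cf x k))^2 / \<epsilon>) / 2"
    by (rule amgm_aux) (use e in auto)
  then show ?thesis using False by (simp add: phterm_def wt_def power_one_over)
qed

lemma summable_phterm_norm: "x \<in> DD \<Longrightarrow> summable (\<lambda>k. norm (phterm x k))"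
proof -
  assume x: "x \<in> DD"
  show ?thesis
  proof (rule summable_comparison_test'[where g="\<lambda>k. (1 * (1/2)^k + wt k * (cmod (cf x k))^2 / 1) / 2"])
    show "summable (\<lambda>k. (1 * (1/2)^k + wt k * (cmod (cf x k))^2 / 1) / 2)"
      using x unfolding DD_def by (intro summable_divide summable_add summable_geometric) auto
    fix k show "norm (norm (phterm x k)) \<le> (1 * (1/2)^k + wt k * (cmod (cf x k))^2 / 1) / 2"
      using phterm_bound[of 1 x k] by simp
  qed
qed

lemma summable_phterm: "x \<in> DD \<Longrightarrow> summable (phterm x)"
  using summable_phterm_norm summable_norm_cancel by blast

lemma ph_bound_eps: assumes x: "x \<in> DD" and e: "\<epsilon> > 0" shows "cmod (ph x) \<le> \<epsilon> + TT x / (2 * \<epsilon>)"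
proof -
  have sg: "summable (\<lambda>k. (\<epsilon> * (1/2)^k + wt k * (cmod (cf x k))^2 / \<epsilon>) / 2)"
    using x unfolding DD_def by (intro summable_divide summable_add summable_mult summable_geometric) auto
  have "cmod (ph x) \<le> (\<Sum>k. norm (phterm x k))" unfolding ph_alt
    by (rule summable_norm[OF summable_phterm_norm[OF x]])
  also have "\<dots> \<le> (\<Sum>k. (\<epsilon> * (1/2)^k + wt k * (cmod (cf x k))^2 / \<epsilon>) / 2)"
    by (rule suminf_le[OF phterm_bound[OF e] summable_phterm_norm[OF x] sg])
  also have "\<dots> = (\<epsilon> * (\<Sum>k. (1/2::real)^k) + (\<Sum>k. wt k * (cmod (cf x k))^2) / \<epsilon>) / 2"
  proof -
    have s1: "summable (\<lambda>k. (1/2::real)^k)" by (rule summable_geometric) simp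
    have s2: "summable (\<lambda>k. wt k * (cmod (cf x k))^2)" using x unfolding DD_def by simp
    have sA: "summable (\<lambda>k. \<epsilon> * (1/2::real)^k)" using s1 by (rule summable_mult)
    have sB: "summable (\<lambda>k. wt k * (cmod (cf x k))^2 / \<epsilon>)" using s2 by (rule summable_divide)
    have "(\<Sum>k. (\<epsilon> * (1/2)^k + wt k * (cmod (cf x k))^2 / \<epsilon>) / 2)
        = (\<Sum>k. \<epsilon> * (1/2)^k + wt k * (cmod (cf x k))^2 / \<epsilon>) / 2"
      by (rule suminf_divide) (rule summable_add[OF sA sB])
    also have "(\<Sum>k. \<epsilon> * (1/2)^k + wt k * (cmod (cf x k))^2 / \<epsilon>)
        = (\<Sum>k. \<epsilon> * (1/2::real)^k) + (\<Sum>k. wt k * (cmod (cf x k))^2 / \<epsilon>)"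
      by (rule suminf_add[OF sA sB, symmetric])
    also have "(\<Sum>k. \<epsilon> * (1/2::real)^k) = \<epsilon> * (\<Sum>k. (1/2::real)^k)" by (rule suminf_mult[OF s1])
    also have "(\<Sum>k. wt k * (cmod (cf x k))^2 / \<epsilon>) = (\<Sum>k. wt k * (cmod (cf x k))^2) / \<epsilon>"
      by (rule suminf_divide[OF s2])
    finally show ?thesis .
  qed
  also have "\<dots> = \<epsilon> + TT x / (2 * \<epsilon>)"
    by (simp add: suminf_geometric TT_def)
  finally show ?thesis .
qed

lemma ph_bound: assumes x: "x \<in> DD" shows "(cmod (ph x))^2 \<le> 3 * TT x"
proof (cases "TT x = 0")
  case True
  have "cmod (ph x) \<le> 0"
  proof (rule field_le_epsilon)
    fix e :: real assume "e > 0" then show "cmod (ph x) \<le> 0 + e" using ph_bound_eps[OF x, of e] True by simp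
  qed
  then show ?thesis using True by simp
next
  case False
  then have tp: "TT x > 0" using TT_ge0[OF x] by simp
  have "cmod (ph x) \<le> sqrt (TT x) + TT x / (2 * sqrt (TT x))"
    by (rule ph_bound_eps[OF x]) (use tp in simp)
  also have "TT x / (2 * sqrt (TT x)) = sqrt (TT x) / 2"
    using tp by (metis nonzero_mult_div_cancel_left real_div_sqrt less_eq_real_def real_sqrt_gt_0_iff
      times_divide_eq_right divide_divide_eq_left zero_neq_numeral mult.commute)
  finally have "cmod (ph x) \<le> 3/2 * sqrt (TT x)" by simp
  then have "(cmod (ph x))^2 \<le> (3/2 * sqrt (TT x))^2" by (simp add: power_mono)
  also have "\<dots> = 9/4 * TT x" using tp by (simp add: power_mult_distrib power_divide)
  finally show ?thesis using tp by simp
qed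

lemma ph_add: assumes x: "x \<in> DD" and y: "y \<in> DD" shows "ph (x + y) = ph x + ph y"
proof -
  have eq: "phterm (x + y) = (\<lambda>k. phterm x k + phterm y k)" by (simp add: fun_eq_iff phterm_def cf_add)
  show ?thesis by (simp only: ph_alt eq suminf_add[OF summable_phterm[OF x] summable_phterm[OF y], symmetric])
qed

lemma ph_sm: assumes x: "x \<in> DD" shows "ph (sm c x) = c * ph x"
proof -
  have eq: "phterm (sm c x) = (\<lambda>k. c * phterm x k)" by (simp add: fun_eq_iff phterm_def cf_sm)
  show ?thesis by (simp only: ph_alt eq suminf_mult[OF summable_phterm[OF x]])
qed

lemma ph_diff: "x \<in> DD \<Longrightarrow> y \<in> DD \<Longrightarrow> ph (x - y) = ph x - ph y"
proof -
  assume x: "x \<in> DD" and y: "y \<in> DD"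
  have "ph (x - y) + ph y = ph x" using ph_add[OF DD_diff[OF x y] y] by simp
  then show ?thesis by (simp add: algebra_simps)
qed

end

context hsi
begin

definition FF :: "real \<Rightarrow> real \<Rightarrow> 'a form" where
  "FF a b = (DD, \<lambda>x y. if x \<in> DD \<and> y \<in> DD then of_real a * T x y + of_real b * (ph x * cnj (ph y)) else 0)"

lemma fdom_FF[simp]: "fdom (FF a b) = DD" by (simp add: FF_def fdom_def)
lemma fval_FF: "fval (FF a b) x y = (if x \<in> DD \<and> y \<in> DD then of_real a * T x y + of_real b * (ph x * cnj (ph y)) else 0)"
  by (simp add: FF_def fval_def)

lemma is_form_FF: "is_form sm ip (FF a b)"
  unfolding is_form_def fdom_FF
proof (intro conjI ballI allI impI)
  show "vs.subspace DD" by (rule DD_subspace)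
  show "dense_in ip DD" by (rule DD_dense)
  fix x y z assume x: "x \<in> DD" and y: "y \<in> DD" and z: "z \<in> DD"
  show "fval (FF a b) (x + y) z = fval (FF a b) x z + fval (FF a b) y z"
    using x y z DD_add[OF x y] by (simp add: fval_FF T_addL ph_add algebra_simps)
  show "fval (FF a b) z (x + y) = fval (FF a b) z x + fval (FF a b) z y"
    using x y z DD_add[OF x y] by (simp add: fval_FF T_addR ph_add algebra_simps)
next
  fix c x y assume x: "x \<in> DD" and y: "y \<in> DD"
  show "fval (FF a b) (sm c x) y = c * fval (FF a b) x y"
    using x y DD_sm[OF x] by (simp add: fval_FF T_smL ph_sm algebra_simps)
  show "fval (FF a b) x (sm c y) = cnj c * fval (FF a b) x y"
    using x y DD_sm[OF y] by (simp add: fval_FF T_smR ph_sm algebra_simps)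
next
  fix x y assume "\<not> (x \<in> DD \<and> y \<in> DD)"
  then show "fval (FF a b) x y = 0" by (auto simp: fval_FF)
qed

lemma FF_self: "x \<in> DD \<Longrightarrow> fval (FF a b) x x = of_real (a * TT x + b * (cmod (ph x))^2)"
  by (simp add: fval_FF T_self mult_cnj_sq)

lemma Re_FF: "x \<in> DD \<Longrightarrow> Re (fval (FF a b) x x) = a * TT x + b * (cmod (ph x))^2"
  by (simp only: FF_self Re_complex_of_real)

lemma positive_FF: "a \<ge> 0 \<Longrightarrow> b \<ge> 0 \<Longrightarrow> positive_form (FF a b)"
  unfolding positive_form_def by (simp add: FF_self TT_ge0)

lemma form_plus_FF: "form_plus (FF a b) (FF c d) = FF (a + c) (b + d)"
  unfolding form_plus_def FF_def by (auto simp: fdom_def fval_def algebra_simps fun_eq_iff)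

lemma cf_e: "cf (e j) k = (if k = j then 1 else 0)"
  by (simp add: cf_def e_on)

lemma e_DD: "e j \<in> DD" by (rule DD_finite[of "Suc j"]) (simp add: cf_e)

lemma TT_e: "TT (e j) = wt j"
proof -
  have "TT (e j) = (\<Sum>k\<in>{j}. wt k * (cmod (cf (e j) k))^2)"
    unfolding TT_def by (rule suminf_finite) (auto simp: cf_e)
  then show ?thesis by (simp add: cf_e)
qed

lemma ph_e: "ph (e j) = (if j = 0 then 0 else 1)"
proof -
  have "ph (e j) = (\<Sum>k\<in>{j}. phterm (e j) k)"
    unfolding ph_alt by (rule suminf_finite) (auto simp: cf_e phterm_def)
  then show ?thesis by (simp add: cf_e phterm_def)
qed

lemma lb_FF: assumes "a \<ge> 0" "b \<ge> 0" shows "lower_bound_form ip (FF a b) = 0"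
  unfolding lower_bound_form_def
proof (rule cInf_eq_minimum)
  show "0 \<in> {Re (fval (FF a b) x x) |x. x \<in> fdom (FF a b) \<and> hn x = 1}"
    using e_DD[of 0] hn_e[of 0] by (auto simp: FF_self TT_e ph_e wt_def intro!: exI[of _ "e 0"])
  fix r assume "r \<in> {Re (fval (FF a b) x x) |x. x \<in> fdom (FF a b) \<and> hn x = 1}"
  then show "0 \<le> r" using assms by (auto simp: FF_self TT_ge0)
qed

lemma tnorm_FF: assumes "a \<ge> 0" "b \<ge> 0" "x \<in> DD"
  shows "tnorm ip (FF a b) x = sqrt (a * TT x + b * (cmod (ph x))^2 + (hn x)^2)"
  unfolding tnorm_def lb_FF[OF assms(1,2)] using assms(3) by (simp add: FF_self ip_self)

lemma not_bounded_FF: assumes "a > 0" "b \<ge> 0" shows "\<not> bounded_form ip (FF a b)"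
proof
  assume "bounded_form ip (FF a b)"
  then obtain M where M: "\<And>r. r \<in> {Re (fval (FF a b) x x) |x. x \<in> fdom (FF a b) \<and> hn x = 1} \<Longrightarrow> r \<le> M"
    unfolding bounded_form_def bdd_above_def by blast
  obtain n :: nat where n: "M / a + 1 < n" using reals_Archimedean2 by blast
  have "Re (fval (FF a b) (e (Suc n)) (e (Suc n))) \<le> M"
    by (rule M) (use e_DD hn_e in auto)
  then have le: "a * 2^(Suc n) + b \<le> M" using e_DD[of "Suc n"] by (simp add: FF_self TT_e ph_e wt_def)
  have "real (Suc n) < 2^(Suc n)" by (rule of_nat_less_two_power)
  then have "real n < 2^(Suc n)" by simp
  then have "a * real n < a * 2^(Suc n)" using assms by simp
  moreover have "M < a * real n" using n assms by (simp add: field_simps)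
  ultimately show False using le assms by linarith
qed

end

lemma null_sandwich: fixes f g :: "nat \<Rightarrow> real"
  assumes "\<And>n. 0 \<le> f n" "\<And>n. f n \<le> g n" "g \<longlonglongrightarrow> 0" shows "f \<longlonglongrightarrow> 0"
  by (rule real_tendsto_sandwich[where f="\<lambda>_. 0" and h=g]) (use assms in auto)

context hsi
begin

lemma cf_conv: assumes "(\<lambda>n. hn (X n - l)) \<longlonglongrightarrow> 0" shows "(\<lambda>n. cf (X n) k) \<longlonglongrightarrow> cf l k"
proof -
  have "(\<lambda>n. norm (cf (X n) k - cf l k)) \<longlonglongrightarrow> 0"
    by (rule null_sandwich[OF _ _ assms]) (simp_all add: cf_lip)
  then show ?thesis by (rule LIM_zero_cancel[OF tendsto_norm_zero_cancel])
qed

lemma tn_FF_facts: assumes "a \<ge> 0" "b \<ge> 0" "z \<in> DD"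
  shows "(tnorm ip (FF a b) z)^2 = a * TT z + b * (cmod (ph z))^2 + (hn z)^2"
    and "hn z \<le> tnorm ip (FF a b) z"
    and "a * TT z \<le> (tnorm ip (FF a b) z)^2"
proof -
  have nn: "0 \<le> a * TT z + b * (cmod (ph z))^2" using assms TT_ge0 by simp
  show eq: "(tnorm ip (FF a b) z)^2 = a * TT z + b * (cmod (ph z))^2 + (hn z)^2"
    unfolding tnorm_FF[OF assms] using nn by simp
  show "hn z \<le> tnorm ip (FF a b) z" unfolding tnorm_FF[OF assms]
    by (rule real_le_rsqrt) (use nn in simp)
  show "a * TT z \<le> (tnorm ip (FF a b) z)^2" using eq assms by (simp add: hn_ge0 zero_le_mult_iff)
qed

lemma closed_FF: assumes a: "a > 0" and b: "b \<ge> 0" shows "closed_form ip (FF a b)"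
  unfolding closed_form_def
proof (intro conjI allI impI)
  show "positive_form (FF a b)" using a b by (simp add: positive_FF)
  fix X :: "nat \<Rightarrow> 'a"
  assume H: "(\<forall>n. X n \<in> fdom (FF a b)) \<and> (\<forall>e>0. \<exists>N. \<forall>m\<ge>N. \<forall>n\<ge>N. tnorm ip (FF a b) (X m - X n) < e)"
  then have XD: "\<And>n. X n \<in> DD" and C: "\<And>e. e > 0 \<Longrightarrow> \<exists>N. \<forall>m\<ge>N. \<forall>n\<ge>N. tnorm ip (FF a b) (X m - X n) < e"
    by auto
  note tf = tn_FF_facts[OF less_imp_le[OF a] b]
  have "\<exists>l. (\<lambda>n. hn (X n - l)) \<longlonglongrightarrow> 0"
  proof (rule complete, intro allI impI)
    fix e :: real assume "e > 0"
    then obtain N where N: "\<forall>m\<ge>N. \<forall>n\<ge>N. tnorm ip (FF a b) (X m - X n) < e" using C by blast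
    show "\<exists>N. \<forall>m\<ge>N. \<forall>n\<ge>N. hn (X m - X n) < e"
      using N tf(2)[OF DD_diff[OF XD XD]] by (meson le_less_trans)
  qed
  then obtain l where l: "(\<lambda>n. hn (X n - l)) \<longlonglongrightarrow> 0" by blast
  have main: "\<exists>N. \<forall>n\<ge>N. X n - l \<in> DD \<and> TT (X n - l) \<le> e^2 / a" if e: "e > 0" for e
  proof -
    obtain N where N: "\<forall>m\<ge>N. \<forall>n\<ge>N. tnorm ip (FF a b) (X m - X n) < e" using C e by blast
    have fin: "(\<Sum>k<K. wt k * (cmod (cf (X n - l) k))^2) \<le> e^2 / a" if n: "n \<ge> N" for n K
    proof -
      have lim: "(\<lambda>m. \<Sum>k<K. wt k * (cmod (cf (X n - X m) k))^2) \<longlonglongrightarrow> (\<Sum>k<K. wt k * (cmod (cf (X n - l) k))^2)"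
        unfolding cf_diff by (intro tendsto_intros cf_conv[OF l])
      show ?thesis
      proof (rule LIMSEQ_le_const2[OF lim], intro exI allI impI)
        fix m assume m: "m \<ge> N"
        have z: "X n - X m \<in> DD" by (rule DD_diff[OF XD XD])
        have "(\<Sum>k<K. wt k * (cmod (cf (X n - X m) k))^2) \<le> TT (X n - X m)"
          unfolding TT_def using z unfolding DD_def by (intro sum_le_suminf) (auto simp: wt_ge0)
        also have "\<dots> \<le> e^2 / a"
        proof -
          have "a * TT (X n - X m) \<le> (tnorm ip (FF a b) (X n - X m))^2" by (rule tf(3)[OF z])
          also have "\<dots> \<le> e^2"
          proof -
            have lt: "tnorm ip (FF a b) (X n - X m) < e" using N m n by blast
            have ge: "0 \<le> tnorm ip (FF a b) (X n - X m)" using tf(2)[OF z] hn_ge0[of "X n - X m"] by linarith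
            show ?thesis using lt ge by (intro power_mono) auto
          qed
          finally show ?thesis using a by (simp add: field_simps mult.commute)
        qed
        finally show "(\<Sum>k<K. wt k * (cmod (cf (X n - X m) k))^2) \<le> e^2 / a" .
      qed
    qed
    show ?thesis
    proof (intro exI allI impI conjI)
      fix n assume n: "n \<ge> N"
      have sm: "summable (\<lambda>k. wt k * (cmod (cf (X n - l) k))^2)"
      proof (rule bounded_imp_summable[where B="e^2/a"])
        fix j show "0 \<le> wt j * (cmod (cf (X n - l) j))^2" by (simp add: wt_ge0)
        show "(\<Sum>k\<le>j. wt k * (cmod (cf (X n - l) k))^2) \<le> e^2/a"
          using fin[OF n, of "Suc j"] by (simp add: lessThan_Suc_atMost)
      qed
      then show "X n - l \<in> DD" unfolding DD_def by simp
      show "TT (X n - l) \<le> e^2/a" unfolding TT_def by (rule suminf_le_const[OF sm fin[OF n]])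
    qed
  qed
  obtain N1 where N1: "\<forall>n\<ge>N1. X n - l \<in> DD" using main[of 1] by auto
  have lD: "l \<in> DD" using DD_diff[OF XD[of N1] N1[rule_format, of N1]] by simp
  have TT0: "(\<lambda>n. TT (X n - l)) \<longlonglongrightarrow> 0"
    unfolding LIMSEQ_iff
  proof (intro allI impI)
    fix r :: real assume r: "r > 0"
    define e where "e = sqrt (a * r / 2)"
    have e: "e > 0" using a r by (simp add: e_def)
    have e2: "e^2 / a = r / 2" using a r by (simp add: e_def)
    obtain N where N: "\<forall>n\<ge>N. X n - l \<in> DD \<and> TT (X n - l) \<le> e^2 / a" using main[OF e] by blast
    show "\<exists>no. \<forall>n\<ge>no. norm (TT (X n - l) - 0) < r"
      using N e2 r TT_ge0 by (auto intro!: exI[of _ N])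
  qed
  show "\<exists>l\<in>fdom (FF a b). (\<lambda>n. tnorm ip (FF a b) (X n - l)) \<longlonglongrightarrow> 0"
  proof (intro bexI)
    show "l \<in> fdom (FF a b)" using lD by simp
    have ev: "\<And>n. tnorm ip (FF a b) (X n - l) = sqrt (a * TT (X n - l) + b * (cmod (ph (X n - l)))^2 + (hn (X n - l))^2)"
      using tnorm_FF[OF less_imp_le[OF a] b DD_diff[OF XD lD]] by simp
    have ph0: "(\<lambda>n. (cmod (ph (X n - l)))^2) \<longlonglongrightarrow> 0"
    proof (rule null_sandwich)
      show "\<And>n. (cmod (ph (X n - l)))^2 \<le> 3 * TT (X n - l)" by (rule ph_bound[OF DD_diff[OF XD lD]])
      show "(\<lambda>n. 3 * TT (X n - l)) \<longlonglongrightarrow> 0" using tendsto_mult[OF tendsto_const TT0, of 3] by simp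
    qed simp
    have "(\<lambda>n. sqrt (a * TT (X n - l) + b * (cmod (ph (X n - l)))^2 + (hn (X n - l))^2))
           \<longlonglongrightarrow> sqrt (a * 0 + b * 0 + 0^2)"
      by (intro tendsto_intros TT0 ph0 l)
    then show "(\<lambda>n. tnorm ip (FF a b) (X n - l)) \<longlonglongrightarrow> 0" unfolding ev by simp
  qed
qed

end

context hs
begin

lemma form_expand:
  assumes t: "is_form sm ip t" and x: "x \<in> fdom t" and y: "y \<in> fdom t"
  shows "fval t (x + sm c y) (x + sm c y) = fval t x x + cnj c * fval t x y + c * fval t y x + c * cnj c * fval t y y"
proof -
  have sub: "vs.subspace (fdom t)" using t by (simp add: is_form_def)
  have cy: "sm c y \<in> fdom t" using vs.subspace_scale[OF sub y] .
  have xcy: "x + sm c y \<in> fdom t" using vs.subspace_add[OF sub x cy] .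
  have "fval t (x + sm c y) (x + sm c y) = fval t x (x + sm c y) + fval t (sm c y) (x + sm c y)"
    using t x cy xcy unfolding is_form_def by blast
  also have "fval t x (x + sm c y) = fval t x x + fval t x (sm c y)"
    using t x cy unfolding is_form_def by blast
  also have "fval t (sm c y) (x + sm c y) = fval t (sm c y) x + fval t (sm c y) (sm c y)"
    using t x cy unfolding is_form_def by blast
  also have "fval t x (sm c y) = cnj c * fval t x y" using t x y unfolding is_form_def by blast
  also have "fval t (sm c y) x = c * fval t y x" using t x y unfolding is_form_def by blast
  also have "fval t (sm c y) (sm c y) = c * fval t y (sm c y)" using t y cy unfolding is_form_def by blast
  also have "fval t y (sm c y) = cnj c * fval t y y" using t y unfolding is_form_def by blast
  finally show ?thesis by (simp add: algebra_simps)
qed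

lemma form_eqI:
  assumes r: "is_form sm ip r" and s: "is_form sm ip s" and d: "fdom r = fdom s"
    and q: "\<And>x. x \<in> fdom r \<Longrightarrow> fval r x x = fval s x x"
  shows "r = s"
proof -
  have fv: "fval r x y = fval s x y" for x y
  proof (cases "x \<in> fdom r \<and> y \<in> fdom r")
    case False then show ?thesis using r s d unfolding is_form_def by metis
  next
    case True
    then have x: "x \<in> fdom r" and y: "y \<in> fdom r" by auto
    have sub: "vs.subspace (fdom r)" using r by (simp add: is_form_def)
    have xy: "x + sm c y \<in> fdom r" for c using vs.subspace_add[OF sub x vs.subspace_scale[OF sub y]] .
    define A where "A = fval r x y - fval s x y"
    define B where "B = fval r y x - fval s y x"
    have eq: "cnj c * A + c * B = 0" for c
    proof -
      have "fval r (x + sm c y) (x + sm c y) = fval s (x + sm c y) (x + sm c y)" by (rule q[OF xy])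
      then show ?thesis
        unfolding form_expand[OF r x y] form_expand[OF s, of x y, folded d, OF x y] A_def B_def
        using q[OF x] q[OF y] by (simp add: algebra_simps)
    qed
    have 1: "A + B = 0" using eq[of 1] by simp
    have 2: "- \<i> * A + \<i> * B = 0" using eq[of "\<i>"] by simp
    have "A = 0" using 1 2 by (simp add: complex_eq_iff) 
    then show ?thesis by (simp add: A_def)
  qed
  show ?thesis using d fv by (simp add: prod_eq_iff fdom_def fval_def fun_eq_iff)
qed

lemma form_null:
  assumes t: "is_form sm ip t" and p: "positive_form t" and v: "v \<in> fdom t" and w: "w \<in> fdom t"
    and z: "fval t v v = 0"
  shows "fval t w v = 0"
proof -
  define A where "A = fval t w v"
  define B where "B = fval t v w"
  have q: "fval t (w + sm c v) (w + sm c v) = fval t w w + cnj c * A + c * B" for c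
    unfolding form_expand[OF t w v] A_def B_def z by simp
  have sub: "vs.subspace (fdom t)" using t by (simp add: is_form_def)
  have mem: "w + sm c v \<in> fdom t" for c using vs.subspace_add[OF sub w vs.subspace_scale[OF sub v]] .
  have pos: "Im (fval t w w + cnj c * A + c * B) = 0 \<and> Re (fval t w w + cnj c * A + c * B) \<ge> 0" for c
    using p mem[of c] unfolding positive_form_def q[symmetric] by blast
  have ww: "Im (fval t w w) = 0" "Re (fval t w w) \<ge> 0" using p w unfolding positive_form_def by auto
  have i1: "Im A + Im B = 0" using pos[of 1] ww by simp
  have i2: "Re B - Re A = 0" using pos[of "\<i>"] ww by simp
  show ?thesis
  proof (rule ccontr)
    assume "fval t w v \<noteq> 0"
    then have Ap: "(cmod A)^2 > 0" by (simp add: A_def)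
    define r where "r = (Re (fval t w w) + 1) / (cmod A)^2"
    have "Re (fval t w w + cnj (- of_real r * A) * A + (- of_real r * A) * B) \<ge> 0"
      using pos by blast
    moreover have "Re (fval t w w + cnj (- of_real r * A) * A + (- of_real r * A) * B) = Re (fval t w w) - 2 * r * (cmod A)^2"
    proof -
      have iB: "Im B = - Im A" using i1 by simp
      have rB: "Re B = Re A" using i2 by simp
      have cm: "(cmod A)^2 = Re A * Re A + Im A * Im A" using cmod_power2[of A] by (simp add: power2_eq_square)
      show ?thesis unfolding cm by (simp add: iB rB algebra_simps)
    qed
    moreover have "r * (cmod A)^2 = Re (fval t w w) + 1" using Ap by (simp add: r_def)
    ultimately show False using ww by linarith
  qed
qed

lemma form_null2:
  assumes t: "is_form sm ip t" and p: "positive_form t" and v: "v \<in> fdom t" and w: "w \<in> fdom t"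
    and z: "fval t v v = 0"
  shows "fval t v w = 0"
proof -
  have sub: "vs.subspace (fdom t)" using t by (simp add: is_form_def)
  have A: "fval t w v = 0" by (rule form_null[OF t p v w z])
  have im: "Im (fval t (w + sm c v) (w + sm c v)) = 0" for c
    using p vs.subspace_add[OF sub w vs.subspace_scale[OF sub v]] unfolding positive_form_def by blast
  have imw: "Im (fval t w w) = 0" using p w unfolding positive_form_def by blast
  have e1: "fval t (w + sm 1 v) (w + sm 1 v) = fval t w w + fval t v w"
    using form_expand[OF t w v, of 1] z A by simp
  have e2: "fval t (w + sm \<i> v) (w + sm \<i> v) = fval t w w + \<i> * fval t v w"
    using form_expand[OF t w v, of "\<i>"] z A by simp
  have "Im (fval t v w) = 0" using im[of 1] e1 imw by simp
  moreover have "Re (fval t v w) = 0" using im[of "\<i>"] e2 imw by simp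
  ultimately show ?thesis by (simp add: complex_eq_iff)
qed

end

context hs
begin

lemma lb_nonneg:
  assumes p: "positive_form t" and u: "u \<in> fdom t" "hn u = 1"
  shows "lower_bound_form ip t \<ge> 0"
  unfolding lower_bound_form_def
  by (rule cInf_greatest) (use p u in \<open>auto simp: positive_form_def\<close>)

lemma tn_facts:
  assumes t: "is_form sm ip t" and p: "positive_form t" and u: "u \<in> fdom t" "hn u = 1"
  shows "(tnorm ip t z)^2 = Re (fval t z z) + (1 + lower_bound_form ip t) * (hn z)^2"
    and "hn z \<le> tnorm ip t z"
    and "Re (fval t z z) \<le> (tnorm ip t z)^2"
proof -
  have m: "lower_bound_form ip t \<ge> 0" by (rule lb_nonneg[OF p u])
  have fz: "Re (fval t z z) \<ge> 0"
  proof (cases "z \<in> fdom t")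
    case True then show ?thesis using p by (simp add: positive_form_def)
  next
    case False then show ?thesis using t by (simp add: is_form_def)
  qed
  have re: "Re (fval t z z + complex_of_real (1 + lower_bound_form ip t) * ip z z) = Re (fval t z z) + (1 + lower_bound_form ip t) * (hn z)^2"
    by (simp add: ip_self)
  have nn: "0 \<le> Re (fval t z z) + (1 + lower_bound_form ip t) * (hn z)^2" using m fz by simp
  show eq: "(tnorm ip t z)^2 = Re (fval t z z) + (1 + lower_bound_form ip t) * (hn z)^2"
    unfolding tnorm_def re using nn by simp
  have "1 * (hn z)^2 \<le> (1 + lower_bound_form ip t) * (hn z)^2"
    using m by (intro mult_right_mono) auto
  then have "(hn z)^2 \<le> (tnorm ip t z)^2" unfolding eq using fz by linarith
  moreover have "0 \<le> tnorm ip t z" unfolding tnorm_def re using nn by simp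
  ultimately show "hn z \<le> tnorm ip t z" by (rule power2_le_imp_le)
  show "Re (fval t z z) \<le> (tnorm ip t z)^2" unfolding eq using m by simp
qed

lemma closed_limit:
  assumes t: "is_form sm ip t" and p: "positive_form t" and c: "closed_form ip t"
    and u: "u \<in> fdom t" "hn u = 1"
    and v: "\<And>n. v n \<in> fdom t" and z: "\<And>n m. Re (fval t (v n - v m) (v n - v m)) = 0"
    and lim: "(\<lambda>n. hn (v n - x)) \<longlonglongrightarrow> 0"
  shows "x \<in> fdom t \<and> (\<lambda>n. Re (fval t (v n - x) (v n - x))) \<longlonglongrightarrow> 0"
proof -
  define m where "m = lower_bound_form ip t"
  have m: "m \<ge> 0" unfolding m_def by (rule lb_nonneg[OF p u])
  note tf = tn_facts[OF t p u, folded m_def]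
  have cau: "\<forall>e>0. \<exists>N. \<forall>i\<ge>N. \<forall>j\<ge>N. tnorm ip t (v i - v j) < e"
  proof (intro allI impI)
    fix e :: real assume e: "e > 0"
    define d where "d = e / (2 * sqrt (1 + m))"
    have d: "d > 0" using e m by (simp add: d_def)
    obtain N where N: "\<forall>n\<ge>N. norm (hn (v n - x) - 0) < d" using lim[unfolded LIMSEQ_iff] d by blast
    show "\<exists>N. \<forall>i\<ge>N. \<forall>j\<ge>N. tnorm ip t (v i - v j) < e"
    proof (intro exI allI impI)
      fix i j assume i: "i \<ge> N" and j: "j \<ge> N"
      have "(tnorm ip t (v i - v j))^2 = (1 + m) * (hn (v i - v j))^2" using tf(1) z by simp
      then have sq: "sqrt ((tnorm ip t (v i - v j))^2) = sqrt ((1 + m) * (hn (v i - v j))^2)" by simp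
      have tge: "0 \<le> tnorm ip t (v i - v j)" using tf(2)[of "v i - v j"] hn_ge0[of "v i - v j"] by linarith
      have "tnorm ip t (v i - v j) = sqrt (1 + m) * hn (v i - v j)"
        using sq tge hn_ge0[of "v i - v j"] by (simp add: real_sqrt_mult)
      also have "\<dots> \<le> sqrt (1 + m) * (hn (v i - x) + hn (x - v j))"
        using hn_diff_tri[of "v i" "v j" x] by (rule mult_left_mono) (use m in simp)
      also have "\<dots> < sqrt (1 + m) * (d + d)"
        using N i j m by (intro mult_strict_left_mono add_strict_mono) (auto simp: hn_commute[of x])
      also have "\<dots> = e" using m by (simp add: d_def)
      finally show "tnorm ip t (v i - v j) < e" .
    qed
  qed
  obtain l where l: "l \<in> fdom t" and tl: "(\<lambda>n. tnorm ip t (v n - l)) \<longlonglongrightarrow> 0"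
    using c v cau unfolding closed_form_def by blast
  have hl: "(\<lambda>n. hn (v n - l)) \<longlonglongrightarrow> 0"
    by (rule null_sandwich[OF _ _ tl]) (auto simp: hn_ge0 tf(2))
  have "hn (x - l) \<le> 0"
  proof (rule LIMSEQ_le_const[OF tendsto_add[OF lim hl, simplified]], intro exI allI impI)
    fix n show "hn (x - l) \<le> hn (v n - x) + hn (v n - l)"
      using hn_diff_tri[of x l "v n"] by (simp add: hn_commute[of x])
  qed
  then have "x = l" using hn_ge0[of "x - l"] hn_0_iff[of "x - l"] by simp
  moreover have "(\<lambda>n. Re (fval t (v n - x) (v n - x))) \<longlonglongrightarrow> 0"
  proof -
    have t2: "(\<lambda>n. (tnorm ip t (v n - l))^2) \<longlonglongrightarrow> 0" using tendsto_power[OF tl, of 2] by simp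
    have "Re (fval t (v n - x) (v n - x)) \<ge> 0" for n
      using p t \<open>x = l\<close> l v vs.subspace_diff[of "fdom t" "v n" x] by (auto simp: positive_form_def is_form_def)
    then show ?thesis using \<open>x = l\<close> by (intro null_sandwich[OF _ _ t2]) (auto simp: tf(3))
  qed
  ultimately show ?thesis using l by simp
qed

end

context hs
begin

lemma form_neg:
  assumes t: "is_form sm ip t" and z: "z \<in> fdom t"
  shows "fval t (- z) (- z) = fval t z z"
proof -
  have sub: "vs.subspace (fdom t)" using t by (simp add: is_form_def)
  have mz: "sm (-1) z \<in> fdom t" using vs.subspace_scale[OF sub z] .
  have "fval t (sm (-1) z) (sm (-1) z) = (-1) * fval t z (sm (-1) z)" using t z mz unfolding is_form_def by blast
  also have "fval t z (sm (-1) z) = cnj (-1) * fval t z z" using t z unfolding is_form_def by blast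
  finally show ?thesis by simp
qed

lemma reg_part_unique:
  assumes "is_regular_part sm ip t r1" "is_regular_part sm ip t r2" shows "r1 = r2"
proof (rule form_eqI)
  show "is_form sm ip r1" "is_form sm ip r2" "fdom r1 = fdom r2" using assms by (auto simp: is_regular_part_def)
  fix x assume x: "x \<in> fdom r1"
  have "Re (fval r1 x x) \<le> Re (fval r2 x x)" "Re (fval r2 x x) \<le> Re (fval r1 x x)"
    using assms x unfolding is_regular_part_def by (metis (no_types, lifting))+
  moreover have "Im (fval r1 x x) = 0" "Im (fval r2 x x) = 0"
    using assms x unfolding is_regular_part_def positive_form_def by auto
  ultimately show "fval r1 x x = fval r2 x x" by (simp add: complex_eq_iff)
qed

lemma regular_part_eq: "is_regular_part sm ip t r \<Longrightarrow> regular_part sm ip t = r"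
  unfolding regular_part_def by (rule the_equality) (auto intro: reg_part_unique)

lemma closed_regular:
  assumes t: "is_form sm ip t" and p: "positive_form t" and c: "closed_form ip t"
  shows "regular_form sm ip t"
proof -
  have "is_regular_part sm ip t t"
    unfolding is_regular_part_def closable_form_def using t p c by blast
  then have "regular_part sm ip t = t" by (rule regular_part_eq)
  then show ?thesis by (simp add: regular_form_def singular_part_def fval_def)
qed

end

context hsi
begin

definition yv :: "nat \<Rightarrow> 'a" where
  "yv n = (\<Sum>k\<in>{1..Suc n}. sm (of_real (1 / real (Suc n))) (e k))"

lemma cf_yv: "cf (yv n) k = (if k \<in> {1..Suc n} then of_real (1 / real (Suc n)) else 0)"
  unfolding yv_def by (rule cf_esum) simp

lemma yv_DD: "yv n \<in> DD"
  by (rule DD_finite[of "Suc (Suc n)"]) (simp add: cf_yv)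

lemma ph_yv: "ph (yv n) = 1"
proof -
  have "ph (yv n) = (\<Sum>k\<in>{1..Suc n}. phterm (yv n) k)"
    unfolding ph_alt by (rule suminf_finite) (auto simp: cf_yv phterm_def)
  also have "\<dots> = (\<Sum>k\<in>{1..Suc n}. of_real (1 / real (Suc n)))"
    by (rule sum.cong) (auto simp: phterm_def cf_yv)
  also have "\<dots> = of_real (real (card {1..Suc n}) * (1 / real (Suc n)))"
    by (simp only: sum_constant of_real_mult of_real_of_nat_eq)
  also have "real (card {1..Suc n}) * (1 / real (Suc n)) = 1" by simp
  finally show ?thesis by simp
qed

lemma hn_yv: "hn (yv n) = sqrt (1 / real (Suc n))"
proof -
  have "(hn (yv n))^2 = (\<Sum>k\<in>{1..Suc n}. (cmod (of_real (1 / real (Suc n)) :: complex))^2)"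
    unfolding yv_def by (rule hn_esum_sq) simp
  also have "\<dots> = (\<Sum>k\<in>{1..Suc n}. (1 / real (Suc n))^2)"
    by (simp only: norm_of_real abs_of_nonneg[of "1 / real (Suc n)"] divide_nonneg_nonneg of_nat_0_le_iff zero_le_one)
  also have "\<dots> = 1 / real (Suc n)" by (simp add: power2_eq_square)
  finally have "(hn (yv n))^2 = 1 / real (Suc n)" .
  then show ?thesis using hn_ge0[of "yv n"] by (metis real_sqrt_abs abs_of_nonneg)
qed

lemma hn_yv_lim: "(\<lambda>n. hn (yv n)) \<longlonglongrightarrow> 0"
  unfolding hn_yv using tendsto_real_sqrt[OF LIMSEQ_inverse_real_of_nat] by (simp add: inverse_eq_divide)

lemma FF01_self: "x \<in> DD \<Longrightarrow> fval (FF 0 1) x x = of_real ((cmod (ph x))^2)"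
  by (simp add: FF_self)

lemma FF01_not_closed: "\<not> closed_form ip (FF 0 1)"
proof
  assume c: "closed_form ip (FF 0 1)"
  have pf: "positive_form (FF 0 1)" by (simp add: positive_FF)
  have "0 \<in> fdom (FF 0 1) \<and> (\<lambda>n. Re (fval (FF 0 1) (yv n - 0) (yv n - 0))) \<longlonglongrightarrow> 0"
  proof (rule closed_limit[OF is_form_FF pf c, where u="e 0" and v=yv and x=0])
    show "e 0 \<in> fdom (FF 0 1)" "hn (e 0) = 1" by (auto simp: e_DD hn_e)
    show "\<And>n. yv n \<in> fdom (FF 0 1)" by (simp add: yv_DD)
    show "\<And>n m. Re (fval (FF 0 1) (yv n - yv m) (yv n - yv m)) = 0"
      by (simp add: FF01_self DD_diff yv_DD ph_diff ph_yv)
    show "(\<lambda>n. hn (yv n - 0)) \<longlonglongrightarrow> 0" using hn_yv_lim by simp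
  qed
  then have "(\<lambda>n. 1::real) \<longlonglongrightarrow> 0" by (simp add: FF01_self yv_DD ph_yv)
  then have "(0::real) = 1" using LIMSEQ_unique[OF _ tendsto_const] by blast
  then show False by simp
qed

end

context hsi
begin

definition ZD :: "'a form" where "ZD = (DD, \<lambda>_ _. 0)"

lemma fdom_ZD[simp]: "fdom ZD = DD" and fval_ZD[simp]: "fval ZD x y = 0"
  by (auto simp: ZD_def fdom_def fval_def)

lemma is_form_ZD: "is_form sm ip ZD"
  unfolding is_form_def by (simp add: DD_subspace DD_dense)

lemma zero_form_closed: "closed_form ip zero_form \<and> is_form sm ip zero_form \<and> positive_form zero_form"
proof -
  have dom: "fdom zero_form = UNIV" and val: "fval zero_form x y = 0" for x y
    by (auto simp: zero_form_def fdom_def fval_def)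
  have lb: "lower_bound_form ip zero_form = 0"
    unfolding lower_bound_form_def dom val
    by (rule cInf_eq_minimum) (use hn_e[of 0] in auto)
  have tn: "tnorm ip zero_form z = hn z" for z
    unfolding tnorm_def lb val by (simp add: ip_self hn_ge0)
  have "closed_form ip zero_form"
    unfolding closed_form_def tn
  proof (intro conjI allI impI)
    show "positive_form zero_form" by (simp add: positive_form_def val)
    fix X :: "nat \<Rightarrow> 'a" assume "(\<forall>n. X n \<in> fdom zero_form) \<and> (\<forall>e>0. \<exists>N. \<forall>m\<ge>N. \<forall>n\<ge>N. hn (X m - X n) < e)"
    then obtain l where "(\<lambda>n. hn (X n - l)) \<longlonglongrightarrow> 0" using complete by blast
    then show "\<exists>l\<in>fdom zero_form. (\<lambda>n. hn (X n - l)) \<longlonglongrightarrow> 0" by (auto simp: dom)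
  qed
  moreover have "is_form sm ip zero_form"
  proof -
    have "dense_in ip UNIV" unfolding dense_in_def
    proof (intro allI impI)
      fix x :: 'a and e :: real assume "e > 0"
      then show "\<exists>y\<in>UNIV. hn (x - y) < e" by (intro bexI[of _ x]) auto
    qed
    then show ?thesis unfolding is_form_def dom val by simp
  qed
  moreover have "positive_form zero_form" by (simp add: positive_form_def val)
  ultimately show ?thesis by simp
qed

lemma closable_ZD: "closable_form sm ip ZD"
  unfolding closable_form_def using zero_form_closed
  by (intro exI[of _ zero_form]) (auto simp: zero_form_def fdom_def fval_def ZD_def)

lemma regpart_FF01: "is_regular_part sm ip (FF 0 1) ZD"
  unfolding is_regular_part_def
proof (intro conjI allI impI ballI)
  show "is_form sm ip ZD" by (rule is_form_ZD)
  show "fdom ZD = fdom (FF 0 1)" by simp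
  show "positive_form ZD" by (simp add: positive_form_def)
  show "closable_form sm ip ZD" by (rule closable_ZD)
  show "\<And>x. x \<in> fdom (FF 0 1) \<Longrightarrow> Re (fval ZD x x) \<le> Re (fval (FF 0 1) x x)"
    by (simp add: FF01_self)
  fix u x
  assume U: "is_form sm ip u \<and> fdom u = fdom (FF 0 1) \<and> positive_form u \<and> closable_form sm ip u \<and>
           (\<forall>x\<in>fdom (FF 0 1). Re (fval u x x) \<le> Re (fval (FF 0 1) x x))"
    and x: "x \<in> fdom (FF 0 1)"
  then have xD: "x \<in> DD" by simp
  from U have uf: "is_form sm ip u" and ud: "fdom u = DD" and up: "positive_form u"
    and ub: "\<And>w. w \<in> DD \<Longrightarrow> Re (fval u w w) \<le> (cmod (ph w))^2"
    by (auto simp: FF01_self)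
  from U obtain s where sf: "is_form sm ip s" and sp: "positive_form s" and sc: "closed_form ip s"
    and sd: "DD \<subseteq> fdom s" and sv: "\<And>a b. a \<in> DD \<Longrightarrow> b \<in> DD \<Longrightarrow> fval s a b = fval u a b"
    unfolding closable_form_def ud by blast
  have uzero: "fval u w w = 0" if w: "w \<in> DD" "ph w = 0" for w
  proof -
    have "Re (fval u w w) \<le> 0" using ub[OF w(1)] w(2) by simp
    moreover have "Re (fval u w w) \<ge> 0" "Im (fval u w w) = 0" using up w ud by (auto simp: positive_form_def)
    ultimately show ?thesis by (simp add: complex_eq_iff)
  qed
  define v where "v n = x - sm (ph x) (yv n)" for n
  have vD: "v n \<in> DD" for n unfolding v_def by (intro DD_diff xD DD_sm yv_DD)
  have phv: "ph (v n) = 0" for n unfolding v_def using xD yv_DD by (simp add: ph_diff DD_sm ph_sm ph_yv)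
  have svv: "fval s (v n) (v n) = 0" for n using sv[OF vD vD] uzero[OF vD phv] by simp
  have lim: "x \<in> fdom s \<and> (\<lambda>n. Re (fval s (v n - x) (v n - x))) \<longlonglongrightarrow> 0"
  proof (rule closed_limit[OF sf sp sc, of "e 0"])
    show "e 0 \<in> fdom s" "hn (e 0) = 1" using sd e_DD hn_e by auto
    show "\<And>n. v n \<in> fdom s" using sd vD by auto
    fix n m
    have "fval s (v n - v m) (v n - v m) = fval u (v n - v m) (v n - v m)" using sv DD_diff vD by blast
    also have "\<dots> = 0" using uzero DD_diff[OF vD vD] ph_diff[OF vD vD] phv by simp
    finally show "Re (fval s (v n - v m) (v n - v m)) = 0" by simp
  next
    have "hn (v n - x) = cmod (ph x) * hn (yv n)" for n
      unfolding v_def by (simp add: hn_minus hn_sm)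
    then show "(\<lambda>n. hn (v n - x)) \<longlonglongrightarrow> 0"
      using tendsto_mult[OF tendsto_const hn_yv_lim, of "cmod (ph x)"] by simp
  qed
  have eq: "Re (fval s x x) = Re (fval s (v n - x) (v n - x))" for n
  proof -
    have sub: "vs.subspace (fdom s)" using sf by (simp add: is_form_def)
    have vs': "v n \<in> fdom s" using sd vD by auto
    have xs: "x \<in> fdom s" using sd xD by auto
    have ws: "x - v n \<in> fdom s" using vs.subspace_diff[OF sub xs vs'] .
    have "fval s (x - v n + sm 1 (v n)) (x - v n + sm 1 (v n)) =
          fval s (x - v n) (x - v n) + fval s (x - v n) (v n) + fval s (v n) (x - v n) + fval s (v n) (v n)"
      using form_expand[OF sf ws vs', of 1] by simp
    also have "fval s (x - v n) (v n) = 0" by (rule form_null[OF sf sp vs' ws svv])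
    also have "fval s (v n) (x - v n) = 0" by (rule form_null2[OF sf sp vs' ws svv])
    also have "fval s (x - v n) (x - v n) = fval s (v n - x) (v n - x)"
      using form_neg[OF sf ws] by (simp add: minus_diff_eq)
    finally show ?thesis using svv by simp
  qed
  have "Re (fval s x x) = 0"
    using lim unfolding eq[symmetric] using LIMSEQ_unique[OF tendsto_const] by blast
  then show "Re (fval u x x) \<le> Re (fval ZD x x)" using sv[OF xD xD] by simp
qed

lemma FF01_not_regular: "\<not> regular_form sm ip (FF 0 1)"
proof
  assume r: "regular_form sm ip (FF 0 1)"
  have rp: "regular_part sm ip (FF 0 1) = ZD" by (rule regular_part_eq[OF regpart_FF01])
  have "fval (singular_part sm ip (FF 0 1)) (yv 0) (yv 0) = 0"
    using r yv_DD unfolding regular_form_def by simp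
  then show False unfolding singular_part_def rp by (simp add: fval_def[of "(_, _)"] yv_DD FF01_self ph_yv)
qed

end

lemma restr_le_D:
  assumes "restr_le ip Q x y"
  shows "\<exists>z\<in>Q. y = form_plus x z \<and> (bounded_form ip x \<or> bounded_form ip z \<or> fdom x = fdom z)"
  using assms unfolding restr_le_def restr_oplus_def form_oplus_def
  by (auto split: if_splits option.splits)

lemma fdom_form_plus[simp]: "fdom (form_plus t s) = fdom t \<inter> fdom s"
  by (simp add: form_plus_def fdom_def)

lemma fval_form_plus: "x \<in> fdom t \<inter> fdom s \<Longrightarrow> y \<in> fdom t \<inter> fdom s \<Longrightarrow> fval (form_plus t s) x y = fval t x y + fval s x y"
  by (simp add: form_plus_def fval_def fdom_def)

context hsi
begin

lemma le_FF:
  assumes Q: "\<And>a b. a > 0 \<Longrightarrow> b \<ge> 0 \<Longrightarrow> FF a b \<in> Q"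
    and "a > 0" "c > 0" "b \<ge> 0" "d \<ge> 0" "a' = a + c" "b' = b + d"
  shows "restr_le ip Q (FF a b) (FF a' b')"
  unfolding restr_le_def restr_oplus_def form_oplus_def
  using assms Q[of c d] Q[of a' b'] by (auto intro!: bexI[of _ "FF c d"] simp: form_plus_FF)

lemma not_mdds:
  assumes Qsub: "Q \<subseteq> Vf sm ip"
    and Qin: "\<And>a b. a > 0 \<Longrightarrow> b \<ge> 0 \<Longrightarrow> FF a b \<in> Q"
    and Qout: "FF 0 1 \<notin> Q"
  shows "\<not> mono_dedekind_down_sigma_complete ip Q"
proof
  assume M: "mono_dedekind_down_sigma_complete ip Q"
  define X where "X n = FF (1 + 1 / real (Suc n)) 1" for n
  have XQ: "X n \<in> Q" for n unfolding X_def by (rule Qin) (auto simp: add_pos_pos)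
  have dec: "restr_le ip Q (X (Suc n)) (X n)" for n
    unfolding X_def
  proof (rule le_FF[OF Qin, where c="1 / real (Suc n) - 1 / real (Suc (Suc n))" and d=0])
    show "0 < 1 / real (Suc n) - 1 / real (Suc (Suc n))" by (simp add: field_simps) (simp add: add_pos_nonneg)
    show "1 + 1 / real (Suc n) = 1 + 1 / real (Suc (Suc n)) + (1 / real (Suc n) - 1 / real (Suc (Suc n)))" by linarith
    show "0 < 1 + 1 / real (Suc (Suc n))" by (intro add_pos_pos) auto
  qed auto
  obtain a where aQ: "a \<in> Q" and alb: "\<And>n. restr_le ip Q a (X n)"
    and agr: "\<And>b. b \<in> Q \<Longrightarrow> (\<forall>n. restr_le ip Q b (X n)) \<Longrightarrow> restr_le ip Q b a"
  proof -
    have "\<exists>a\<in>Q. (\<forall>n. restr_le ip Q a (X n)) \<and> (\<forall>b\<in>Q. (\<forall>n. restr_le ip Q b (X n)) \<longrightarrow> restr_le ip Q b a)"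
      by (rule M[unfolded mono_dedekind_down_sigma_complete_def, rule_format, of X]) (simp add: XQ dec)
    then show ?thesis using that by blast
  qed
  have t1: "restr_le ip Q (FF 1 0) a"
  proof (rule agr[OF Qin], simp_all, intro allI)
    fix n show "restr_le ip Q (FF 1 0) (X n)" unfolding X_def
      by (rule le_FF[OF Qin, where c="1 / real (Suc n)" and d=1]) simp_all
  qed
  have t2: "restr_le ip Q (FF 1 1) a"
  proof (rule agr[OF Qin], simp_all, intro allI)
    fix n show "restr_le ip Q (FF 1 1) (X n)" unfolding X_def
      by (rule le_FF[OF Qin, where c="1 / real (Suc n)" and d=0]) simp_all
  qed
  have VfD: "is_form sm ip q \<and> positive_form q" if "q \<in> Q" for q
    using Qsub that by (auto simp: Vf_def)
  obtain z0 where z0: "z0 \<in> Q" "X 0 = form_plus a z0" using restr_le_D[OF alb[of 0]] by blast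
  have "DD \<subseteq> fdom a" using arg_cong[OF z0(2), of fdom] by (auto simp: X_def)
  obtain w where wQ: "w \<in> Q" and aw: "a = form_plus (FF 1 0) w"
    and wdef: "bounded_form ip (FF 1 0) \<or> bounded_form ip w \<or> fdom (FF 1 0) = fdom w"
    using restr_le_D[OF t1] by blast
  have adom: "fdom a = DD" and wdom: "DD \<subseteq> fdom w"
    using \<open>DD \<subseteq> fdom a\<close> arg_cong[OF aw, of fdom] by auto
  obtain w2 where w2Q: "w2 \<in> Q" and aw2: "a = form_plus (FF 1 1) w2"
    using restr_le_D[OF t2] by blast
  have w2dom: "DD \<subseteq> fdom w2" using adom arg_cong[OF aw2, of fdom] by auto
  have aval: "Re (fval a x x) = TT x + (cmod (ph x))^2" if x: "x \<in> DD" for x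
  proof -
    have ge: "Re (fval a x x) \<ge> TT x + (cmod (ph x))^2"
    proof -
      have "fval a x x = fval (FF 1 1) x x + fval w2 x x"
        using aw2 x w2dom by (simp add: fval_form_plus subsetD)
      moreover have "Re (fval w2 x x) \<ge> 0" using VfD[OF w2Q] x w2dom by (auto simp: positive_form_def)
      ultimately show ?thesis using x by (simp add: FF_self)
    qed
    have le: "Re (fval a x x) \<le> (1 + 1 / real (Suc n)) * TT x + (cmod (ph x))^2" for n
    proof -
      obtain zn where zn: "zn \<in> Q" "X n = form_plus a zn" using restr_le_D[OF alb[of n]] by blast
      have zdom: "DD \<subseteq> fdom zn" using arg_cong[OF zn(2), of fdom] by (auto simp: X_def)
      have "fval (X n) x x = fval a x x + fval zn x x"
        using zn(2) x zdom adom by (simp add: fval_form_plus subsetD)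
      then have "Re (fval (X n) x x) = Re (fval a x x) + Re (fval zn x x)" by simp
      moreover have "Re (fval (X n) x x) = (1 + 1 / real (Suc n)) * TT x + 1 * (cmod (ph x))^2"
        unfolding X_def by (rule Re_FF[OF x])
      moreover have "Re (fval zn x x) \<ge> 0" using VfD[OF zn(1)] x zdom by (auto simp: positive_form_def)
      ultimately show ?thesis by linarith
    qed
    have lim: "(\<lambda>n. (1 + 1 / real (Suc n)) * TT x + (cmod (ph x))^2) \<longlonglongrightarrow> (1 + 0) * TT x + (cmod (ph x))^2"
    proof -
      have "(\<lambda>n. 1 / real (Suc n)) \<longlonglongrightarrow> 0" using LIMSEQ_inverse_real_of_nat by (simp add: inverse_eq_divide)
      then show ?thesis by (intro tendsto_add tendsto_mult tendsto_const)
    qed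
    have "Re (fval a x x) \<le> TT x + (cmod (ph x))^2"
      using LIMSEQ_le_const[OF lim, of "Re (fval a x x)"] le by auto
    with ge show ?thesis by linarith
  qed
  have wval: "fval w x x = fval (FF 0 1) x x" if x: "x \<in> DD" for x
  proof -
    have "fval a x x = fval (FF 1 0) x x + fval w x x"
      using aw x wdom by (simp add: fval_form_plus subsetD)
    then have "Re (fval a x x) = Re (fval (FF 1 0) x x) + Re (fval w x x)" by simp
    then have "Re (fval w x x) = (cmod (ph x))^2" using aval[OF x] Re_FF[OF x, of 1 0] by simp
    moreover have "Im (fval w x x) = 0" using VfD[OF wQ] x wdom by (auto simp: positive_form_def)
    ultimately show ?thesis using x by (simp add: FF01_self complex_eq_iff)
  qed
  have "\<not> bounded_form ip w"
  proof
    assume "bounded_form ip w"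
    then obtain B where B: "\<And>r. r \<in> {Re (fval w x x) |x. x \<in> fdom w \<and> hn x = 1} \<Longrightarrow> r \<le> B"
      unfolding bounded_form_def bdd_above_def by blast
    obtain n :: nat where n: "B < real n" using reals_Archimedean2 by blast
    define y where "y = sm (of_real (sqrt (real (Suc n)))) (yv n)"
    have yD: "y \<in> DD" unfolding y_def by (intro DD_sm yv_DD)
    have hy: "hn y = 1" unfolding y_def hn_sm hn_yv by (simp add: real_sqrt_divide real_sqrt_mult[symmetric])
    have py: "(cmod (ph y))^2 = real (Suc n)" unfolding y_def using yv_DD by (simp add: ph_sm ph_yv)
    have "Re (fval w y y) \<le> B" using B yD hy wdom by blast
    then show False using wval[OF yD] yD py n by (simp add: FF01_self)
  qed
  then have "fdom w = DD" using wdef not_bounded_FF[of 1 0] by auto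
  have "w = FF 0 1"
    by (rule form_eqI) (use VfD[OF wQ] is_form_FF \<open>fdom w = DD\<close> wval in auto)
  then show False using wQ Qout by simp
qed

end

context hsi
begin

lemma FF_Vf: "a > 0 \<Longrightarrow> b \<ge> 0 \<Longrightarrow> FF a b \<in> Vf sm ip"
  unfolding Vf_def using is_form_FF positive_FF not_bounded_FF by auto

lemma main_result:
  "\<not> mono_dedekind_down_sigma_complete ip (Rf sm ip) \<and> \<not> mono_dedekind_down_sigma_complete ip (Cf sm ip)"
proof
  show "\<not> mono_dedekind_down_sigma_complete ip (Rf sm ip)"
  proof (rule not_mdds)
    fix a b :: real assume a: "a > 0" and b: "b \<ge> 0"
    have "regular_form sm ip (FF a b)"
      by (rule closed_regular[OF is_form_FF positive_FF closed_FF[OF a b]]) (use a b in auto)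
    then show "FF a b \<in> Rf sm ip" using FF_Vf[OF a b] by (simp add: Rf_def)
  qed (auto simp: Rf_def FF01_not_regular)
  show "\<not> mono_dedekind_down_sigma_complete ip (Cf sm ip)"
    by (rule not_mdds) (auto simp: Cf_def FF_Vf FF01_not_closed closed_FF)
qed

end

theorem theorem5p6:
  fixes sm :: "complex \<Rightarrow> 'a::ab_group_add \<Rightarrow> 'a"
    and ip :: "'a \<Rightarrow> 'a \<Rightarrow> complex"
  assumes "complex_hilbert_space sm ip"
    and "infinite_dimensional sm"
  shows "\<not> mono_dedekind_down_sigma_complete ip (Rf sm ip) \<and>
         \<not> mono_dedekind_down_sigma_complete ip (Cf sm ip)"
proof -
  interpret hsi sm ip by unfold_locales (use assms in auto)
  show ?thesis by (rule main_result)
qed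

end
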